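(* Consider the algorithm described in the context, and suppose it does not terminate finitely. Then one of the following two cases occurs. (i) There exists $\bar\tau_{\min}>0$ such that $\tau_k\ge\bar\tau_{\min}$ for all $k\in\mathbb{N}$. In this case $\alpha_k\ge\bar\alpha_{\min}:=\min\{\alpha_0,\ \xi\bar\tau_{\min}/(\bar\tau_{\min}L_g+L_J)\}$ for all $k\in\mathbb{N}$, and for a given $\epsilon>0$ the maximum number of iterations before $\bar\chi_k\le\epsilon$ is $$\Big(\max\Big\{0,\Big\lceil\frac{\log\big(\bar\tau_{\min}/(\alpha_0(\bar\tau_{\min}L_g+L_J))\big)}{\log\xi}\Big\rceil\Big\}+1\Big)\Big\lfloor\frac{\tau_0\big(f(x_0)-f_{\inf}+r(x_0)\big)+\|c(x_0)\|_2}{\bar\kappa_\Phi\epsilon^2}\Big\rfloor,$$ where $\bar\kappa_\Phi:=\eta\min\{\sigma_u\bar\tau_{\min}\bar\alpha_{\min},\ \tfrac{\sigma_c}{2\kappa_c(1+\kappa_{\nabla c}^2)},\ \tfrac{\sigma_c\kappa_v\bar\alpha_{\min}}{2\kappa_c}\}$. (ii) $\lim_{k\to\infty}\tau_k=0$. In this case there exists a subsequence $\mathcal K\subseteq\mathbb{N}$ such that $\lim_{k\in\mathcal K}\|J_k^Tc_k\|_2=0$.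
   Context: Problem: $\min_{x\in\mathbb{R}^n} f(x)+r(x)$ subject to $c(x)=0$, where $f:\mathbb{R}^n\to\mathbb{R}$ and $c:\mathbb{R}^n\to\mathbb{R}^m$ ($m\le n$) are continuously differentiable and $r:\mathbb{R}^n\to\mathbb{R}_{\ge 0}$ is convex. Write $g(x)=\nabla f(x)$, $J(x)=\nabla c(x)^T$, and $f_k=f(x_k)$, $g_k=g(x_k)$, $c_k=c(x_k)$, $J_k=J(x_k)$, $r_k=r(x_k)$. All norms are Euclidean (spectral norm for matrices). Merit function: $\Phi_\tau(x)=\tau(f(x)+r(x))+\|c(x)\|_2$. Algorithm: inputs $x_0$, $\alpha_0>0$, $\tau_{-1}>0$; constants $\kappa_v>0$, $\sigma_c,\epsilon_\tau,\xi,\eta\in(0,1)$, $\sigma_u\in(0,1/2]$, $\bar\sigma_u:=\sigma_u+\tfrac12$. For $k=0,1,\dots$: 1. If $J_k^Tc_k\ne0$, compute $v_k$ with $v_k\in\mathrm{Range}(J_k^T)$, $\|v_k\|_2\le\kappa_v\alpha_k\|J_k^Tc_k\|_2$, $\|c_k+J_kv_k\|_2\le\|c_k+J_kv_k^c\|_2$, where $v_k^c=-\beta_k^cJ_k^Tc_k$ with $\beta_k^c$ minimizing $\tfrac12\|c_k-\beta J_kJ_k^Tc_k\|_2^2$ over $0\le\beta\le\kappa_v\alpha_k$. Otherwise set $v_k=0$, and if $c_k\ne0$ terminate. 2. Let $u_k$ be the unique minimizer of $g_k^Tu+\tfrac1{2\alpha_k}\|u\|_2^2+r(x_k+v_k+u)$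 subject to $J_ku=0$; set $s_k=v_k+u_k$. If $s_k=0$, terminate. By the optimality conditions there exist $g_{r,k}\in\partial r(x_k+s_k)$ and $y_k\in\mathbb{R}^m$ with $g_k+\tfrac1{\alpha_k}u_k+g_{r,k}-J_k^Ty_k=0$; $g_{r,k},y_k$ denote such vectors. 3. Let $D_k:=g_k^Ts_k+\bar\sigma_u\|s_k\|_2^2/\alpha_k+r(x_k+s_k)-r_k$; $\tau_{k,\mathrm{trial}}=\infty$ if $D_k\le0$, else $\tau_{k,\mathrm{trial}}=(1-\sigma_c)(\|c_k\|_2-\|c_k+J_kv_k\|_2)/D_k$. Set $\tau_k=\tau_{k-1}$ if $\tau_{k-1}\le\tau_{k,\mathrm{trial}}$, else $\tau_k=\min\{(1-\epsilon_\tau)\tau_{k-1},\tau_{k,\mathrm{trial}}\}$. 4. With $\Delta q_k(s,\tau):=-\tau(g_k^Ts+\tfrac1{2\alpha_k}\|s\|_2^2+r(x_k+s)-r_k)+\|c_k\|_2-\|c_k+J_ks\|_2$: if $\Phi_{\tau_k}(x_k+s_k)\le\Phi_{\tau_k}(x_k)-\eta\Delta q_k(s_k,\tau_k)$ set $x_{k+1}=x_k+s_k$, $\alpha_{k+1}=\alpha_k$; else $x_{k+1}=x_k$, $\alpha_{k+1}=\xi\alpha_k$. Measure: $\bar\chi_k:=\max\{\|g_k+g_{r,k}-J_k^Ty_k\|_2,\ \|J_k^Tc_k\|_2\}$. Assumption: there is an open convex set $\mathcal X$ containing all iterates $x_k$ and trial points $x_k+s_k$, and positive constants such that for all $x\in\mathcal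 X$: $f(x)\ge f_{\inf}$, $\|\nabla f(x)\|_2\le\kappa_{\nabla f}$, $\|c(x)\|_2\le\kappa_c$, $\|J(x)\|_2\le\kappa_{\nabla c}$, every $w\in\partial r(x)$ has $\|w\|_2\le\kappa_{\partial r}$; $\nabla f$ is $L_g$-Lipschitz and $J$ is $L_J$-Lipschitz on $\mathcal X$. (No uniform lower bound on singular values of $J_k$ is assumed.) *)

theory Defs
  imports "HOL-Analysis.Analysis"
begin

definition subdiff :: "('a::real_inner \<Rightarrow> real) \<Rightarrow> 'a \<Rightarrow> 'a set" where
  "subdiff r x = {w. \<forall>z. r z \<ge> r x + w \<bullet> (z - x)}"

end

theory Submission
  imports Defs
begin


lemma desc1d:
  fixes phi phi' :: "real \<Rightarrow> real" and L :: real
  assumes d: "\<And>t. 0 \<le> t \<Longrightarrow> t \<le> 1 \<Longrightarrow> (phi has_real_derivative phi' t) (at t)"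
    and b: "\<And>t. 0 \<le> t \<Longrightarrow> t \<le> 1 \<Longrightarrow> phi' t \<le> phi' 0 + L * t"
  shows "phi 1 \<le> phi 0 + phi' 0 + L / 2"
proof -
  define psi where "psi t = phi t - t * phi' 0 - L * t^2 / 2" for t
  have "psi 1 \<le> psi 0"
  proof (rule DERIV_nonpos_imp_nonincreasing[of 0 1 psi])
    fix t :: real assume t: "0 \<le> t" "t \<le> 1"
    have "(psi has_real_derivative (phi' t - phi' 0 - L * t)) (at t)"
      unfolding psi_def[abs_def]
      by (rule derivative_eq_intros d[OF t] refl | simp)+
    then show "\<exists>y. (psi has_real_derivative y) (at t) \<and> y \<le> 0"
      using b[OF t] by auto
  qed simp
  then show ?thesis by (simp add: psi_def)
qed

lemma seg_in: "convex X \<Longrightarrow> x \<in> X \<Longrightarrow> y \<in> X \<Longrightarrow> 0 \<le> t \<Longrightarrow> t \<le> 1 \<Longrightarrow> x + t *\<^sub>R (y - x) \<in> X"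
proof -
  assume a: "convex X" "x \<in> X" "y \<in> X" "0 \<le> t" "t \<le> 1"
  have "(1 - t) *\<^sub>R x + t *\<^sub>R y \<in> X" using a by (intro convexD) auto
  moreover have "(1 - t) *\<^sub>R x + t *\<^sub>R y = x + t *\<^sub>R (y - x)" by (simp add: algebra_simps)
  ultimately show ?thesis by simp
qed

lemma descent_f:
  fixes f :: "'a::real_inner \<Rightarrow> real"
  assumes fd: "\<forall>z. GDERIV f z :> g z" and cX: "convex X" and xX: "x \<in> X" and yX: "y \<in> X"
    and lip: "\<forall>z\<in>X. \<forall>w\<in>X. norm (g z - g w) \<le> L * norm (z - w)"
  shows "f y \<le> f x + g x \<bullet> (y - x) + L / 2 * (norm (y - x))\<^sup>2"
proof -
  define d where "d = y - x"
  define phi where "phi t = f (x + t *\<^sub>R d)" for t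
  define phi' where "phi' t = g (x + t *\<^sub>R d) \<bullet> d" for t
  have "phi 1 \<le> phi 0 + phi' 0 + (L * (norm d)\<^sup>2) / 2"
  proof (rule desc1d)
    fix t :: real assume t: "0 \<le> t" "t \<le> 1"
    have h1: "((\<lambda>t. x + t *\<^sub>R d) has_derivative (\<lambda>h. h *\<^sub>R d)) (at t)"
      by (rule derivative_eq_intros refl | simp)+
    have h2: "(f has_derivative (\<lambda>h. h \<bullet> g (x + t *\<^sub>R d))) (at (x + t *\<^sub>R d))"
      using fd by (simp add: gderiv_def)
    have "(phi has_derivative (\<lambda>h. (h *\<^sub>R d) \<bullet> g (x + t *\<^sub>R d))) (at t)"
      unfolding phi_def using has_derivative_compose[OF h1 h2] by (simp add: o_def)
    moreover have "(\<lambda>h. (h *\<^sub>R d) \<bullet> g (x + t *\<^sub>R d)) = (*) (phi' t)"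
      by (auto simp: phi'_def inner_commute)
    ultimately show "(phi has_real_derivative phi' t) (at t)"
      by (simp add: has_field_derivative_def)
    have mem: "x + t *\<^sub>R d \<in> X" using seg_in[OF cX xX yX t] by (simp add: d_def)
    have "phi' t - phi' 0 = (g (x + t *\<^sub>R d) - g x) \<bullet> d" by (simp add: phi'_def inner_diff_left)
    also have "\<dots> \<le> norm (g (x + t *\<^sub>R d) - g x) * norm d" by (rule norm_cauchy_schwarz)
    also have "\<dots> \<le> (L * norm (t *\<^sub>R d)) * norm d"
    proof (rule mult_right_mono)
      have "norm (g (x + t *\<^sub>R d) - g x) \<le> L * norm ((x + t *\<^sub>R d) - x)" using lip mem xX by blast
      then show "norm (g (x + t *\<^sub>R d) - g x) \<le> L * norm (t *\<^sub>R d)" by simp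
    qed simp
    also have "\<dots> = L * (norm d)\<^sup>2 * t" using t by (simp add: power2_eq_square)
    finally show "phi' t \<le> phi' 0 + L * (norm d)\<^sup>2 * t" by simp
  qed
  then show ?thesis by (simp add: phi_def phi'_def d_def inner_commute)
qed

lemma mv_scale: "(A::real^'n^'m) *v (h *\<^sub>R d) = h *\<^sub>R (A *v d)"
  by (simp add: linear.scaleR[OF matrix_vector_mul_linear] )
lemma mv_neg: "(A::real^'n^'m) *v (- d) = - (A *v d)"
  by (simp add: linear_neg[OF matrix_vector_mul_linear] )
lemma mv_adj: "(transpose (A::real^'n^'m) *v z) \<bullet> u = z \<bullet> (A *v u)"
  by (simp add: dot_lmul_matrix)
lemma mv_bl: "bounded_linear (\<lambda>h. (A::real^'n^'m) *v h)"
  by (simp add: linear_linear matrix_vector_mul_linear)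
lemma mv_onorm: "norm ((A::real^'n^'m) *v h) \<le> onorm (\<lambda>h. A *v h) * norm h"
  by (rule onorm[OF mv_bl])

lemma norm_le_from_inner:
  fixes z :: "'a::real_inner"
  assumes "\<And>e. e \<bullet> z \<le> norm e * B" "0 \<le> B"
  shows "norm z \<le> B"
proof (cases "z = 0")
  case True
  then show ?thesis using assms by simp
next
  case False
  have "z \<bullet> z \<le> norm z * B" using assms(1)[of z] .
  then have "norm z * norm z \<le> norm z * B" by (simp add: dot_square_norm power2_eq_square[symmetric])
  then show ?thesis using False by simp
qed

lemma descent_c:
  fixes c :: "real^'n \<Rightarrow> real^'m" and J :: "real^'n \<Rightarrow> real^'n^'m"
  assumes cd: "\<forall>z. (c has_derivative (\<lambda>h. J z *v h)) (at z)" and cX: "convex X" and xX: "x \<in> X" and yX: "y \<in> X" and L0: "0 \<le> L"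
    and lip: "\<forall>z\<in>X. \<forall>w\<in>X. onorm (\<lambda>h. (J z - J w) *v h) \<le> L * norm (z - w)"
  shows "norm (c y - c x - J x *v (y - x)) \<le> L / 2 * (norm (y - x))\<^sup>2"
proof (rule norm_le_from_inner)
  fix e :: "real^'m"
  define d where "d = y - x"
  define phi where "phi t = e \<bullet> c (x + t *\<^sub>R d)" for t
  define phi' where "phi' t = e \<bullet> (J (x + t *\<^sub>R d) *v d)" for t
  have "phi 1 \<le> phi 0 + phi' 0 + (norm e * L * (norm d)\<^sup>2) / 2"
  proof (rule desc1d)
    fix t :: real assume t: "0 \<le> t" "t \<le> 1"
    have h1: "((\<lambda>t. x + t *\<^sub>R d) has_derivative (\<lambda>h. h *\<^sub>R d)) (at t)"
      by (rule derivative_eq_intros refl | simp)+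
    have h2: "(c has_derivative (\<lambda>h. J (x + t *\<^sub>R d) *v h)) (at (x + t *\<^sub>R d))"
      using cd by simp
    have "((\<lambda>t. c (x + t *\<^sub>R d)) has_derivative (\<lambda>h. J (x + t *\<^sub>R d) *v (h *\<^sub>R d))) (at t)"
      using has_derivative_compose[OF h1 h2] by (simp add: o_def)
    then have "(phi has_derivative (\<lambda>h. e \<bullet> (J (x + t *\<^sub>R d) *v (h *\<^sub>R d)))) (at t)"
      unfolding phi_def by (rule has_derivative_inner_right)
    moreover have "(\<lambda>h. e \<bullet> (J (x + t *\<^sub>R d) *v (h *\<^sub>R d))) = (*) (phi' t)"
      by (auto simp: phi'_def mv_scale)
    ultimately show "(phi has_real_derivative phi' t) (at t)"
      by (simp add: has_field_derivative_def)
    have mem: "x + t *\<^sub>R d \<in> X" using seg_in[OF cX xX yX t] by (simp add: d_def)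
    have "phi' t - phi' 0 = e \<bullet> ((J (x + t *\<^sub>R d) - J x) *v d)"
      by (simp add: phi'_def inner_diff_right matrix_vector_mult_diff_rdistrib)
    also have "\<dots> \<le> norm e * norm ((J (x + t *\<^sub>R d) - J x) *v d)" by (rule norm_cauchy_schwarz)
    also have "\<dots> \<le> norm e * (L * norm (t *\<^sub>R d) * norm d)"
    proof (rule mult_left_mono)
      have o: "onorm (\<lambda>h. (J (x + t *\<^sub>R d) - J x) *v h) \<le> L * norm ((x + t *\<^sub>R d) - x)" using lip mem xX by blast
      have "norm ((J (x + t *\<^sub>R d) - J x) *v d) \<le> onorm (\<lambda>h. (J (x + t *\<^sub>R d) - J x) *v h) * norm d"
        by (rule mv_onorm)
      also have "\<dots> \<le> L * norm ((x + t *\<^sub>R d) - x) * norm d" by (rule mult_right_mono[OF o]) simp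
      finally show "norm ((J (x + t *\<^sub>R d) - J x) *v d) \<le> L * norm (t *\<^sub>R d) * norm d" by simp
    qed simp
    also have "\<dots> = norm e * L * (norm d)\<^sup>2 * t" using t by (simp add: power2_eq_square)
    finally show "phi' t \<le> phi' 0 + norm e * L * (norm d)\<^sup>2 * t" by simp
  qed
  then show "e \<bullet> (c y - c x - J x *v (y - x)) \<le> norm e * (L / 2 * (norm (y - x))\<^sup>2)"
    by (simp add: phi_def phi'_def d_def inner_diff_right)
qed (use L0 in simp)


lemma count_inv:
  fixes P a :: "nat \<Rightarrow> real" and sc :: "nat \<Rightarrow> bool"
  assumes h1: "\<forall>k<K. sc k \<longrightarrow> a (Suc k) = a k \<and> P (Suc k) \<le> P k - d"
    and h2: "\<forall>k<K. \<not> sc k \<longrightarrow> a (Suc k) = xi * a k \<and> P (Suc k) \<le> P k \<and> a k > A"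
    and hB: "a 0 * xi ^ B \<le> A" and xi: "0 < xi" "xi < 1" and a0: "a 0 > 0"
  shows "\<exists>S U. S + U = K \<and> U \<le> B \<and> a K = a 0 * xi ^ U \<and> P K + d * S \<le> P 0"
  using h1 h2
proof (induction K)
  case 0 then show ?case by auto
next
  case (Suc K)
  then obtain S U where SU: "S + U = K" "U \<le> B" "a K = a 0 * xi ^ U" "P K + d * S \<le> P 0"
    by auto
  show ?case
  proof (cases "sc K")
    case True
    then have "a (Suc K) = a K" "P (Suc K) \<le> P K - d" using Suc.prems by auto
    then show ?thesis using SU by (intro exI[of _ "Suc S"] exI[of _ U]) (auto simp: algebra_simps)
  next
    case False
    then have st: "a (Suc K) = xi * a K" "P (Suc K) \<le> P K" "a K > A" using Suc.prems by auto
    have "U < B"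
    proof (rule ccontr)
      assume "\<not> U < B"
      then have "xi ^ U \<le> xi ^ B" using xi by (intro power_decreasing) auto
      then have "a 0 * xi ^ U \<le> a 0 * xi ^ B" using a0 by simp
      then show False using st SU hB by simp
    qed
    then show ?thesis using SU st by (intro exI[of _ S] exI[of _ "Suc U"]) auto
  qed
qed



lemma key_real:
  fixes tau al S U Lg su et am P :: real
  assumes t0: "0 \<le> tau" and a0: "0 < al" and U0: "0 \<le> U" and US: "U \<le> S" and Lg: "0 < Lg"
    and su: "0 < su" "su \<le> 1/2" and et: "0 < et" "et < 1" and am: "0 < am" "am \<le> al" "am * Lg \<le> 1"
    and H: "\<And>t. 0 \<le> t \<Longrightarrow> t \<le> 1 \<Longrightarrow> P \<ge> t * tau * (su + 1/2) * S / al - tau * Lg * t\<^sup>2 * S / 2"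
  shows "et * su * tau * am * U / al\<^sup>2 \<le> P"
proof -
  define sb where "sb = su + 1/2"
  have sb0: "sb > 0" using su by (simp add: sb_def)
  have S0: "0 \<le> S" using U0 US by simp
  have tS: "0 \<le> tau * S" using t0 S0 by simp
  show ?thesis
  proof (cases "al * Lg \<le> sb")
    case True
    have P1: "P \<ge> tau * sb * S / al - tau * Lg * S / 2" using H[of 1] by (simp add: sb_def)
    have "Lg \<le> sb / al" using True a0 by (simp add: field_simps)
    then have "tau * S * Lg \<le> tau * S * (sb / al)" using tS by (rule mult_left_mono)
    then have Y: "tau * Lg * S / 2 \<le> (tau * sb * S / al) / 2" by (simp add: field_simps)
    define X where "X = tau * sb * S / al"
    have "P \<ge> X / 2" using Y P1 unfolding X_def[symmetric] by linarith
    then have P2: "P \<ge> tau * sb * S / (2 * al)" by (simp add: X_def)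
    have "et * su * tau * am * U / al\<^sup>2 = (et * am / al) * (su * (tau * U) / al)"
      by (simp add: power2_eq_square field_simps)
    also have "\<dots> \<le> 1 * (su * (tau * U) / al)"
    proof (rule mult_right_mono)
      have "et * am \<le> 1 * al" using et am by (intro mult_mono) auto
      then show "et * am / al \<le> 1" using a0 by (simp add: divide_le_eq)
    qed (use su t0 U0 a0 in simp)
    also have "\<dots> \<le> (sb / 2) * (tau * S) / al"
    proof -
      have "su * (tau * U) \<le> (sb / 2) * (tau * S)"
        using su t0 US U0 by (intro mult_mono mult_left_mono) (auto simp: sb_def)
      then have "su * (tau * U) / al \<le> (sb / 2) * (tau * S) / al" using a0 by (intro divide_right_mono) auto
      then show ?thesis by simp
    qed
    also have "\<dots> = tau * sb * S / (2 * al)" by simp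
    finally show ?thesis using P2 by linarith
  next
    case False
    define t where "t = sb / (al * Lg)"
    have tpos: "0 \<le> t" using sb0 a0 Lg by (simp add: t_def)
    have t1: "t \<le> 1" using False a0 Lg by (simp add: t_def)
    have "P \<ge> t * tau * sb * S / al - tau * Lg * t\<^sup>2 * S / 2" using H[OF tpos t1] by (simp add: sb_def)
    also have "t * tau * sb * S / al - tau * Lg * t\<^sup>2 * S / 2 = tau * S * sb\<^sup>2 / (2 * al\<^sup>2 * Lg)"
      using a0 Lg by (simp add: t_def power2_eq_square field_simps)
    finally have P2: "P \<ge> tau * S * sb\<^sup>2 / (2 * al\<^sup>2 * Lg)" .
    have "et * su * tau * am * U / al\<^sup>2 = (et * (am * Lg)) * (su * (tau * U)) / (al\<^sup>2 * Lg)"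
      using Lg by (simp add: field_simps)
    also have "\<dots> \<le> 1 * (su * (tau * U)) / (al\<^sup>2 * Lg)"
    proof (rule divide_right_mono)
      have "et * (am * Lg) \<le> 1 * 1" using et am Lg by (intro mult_mono) auto
      then show "et * (am * Lg) * (su * (tau * U)) \<le> 1 * (su * (tau * U))"
        using su t0 U0 by (intro mult_right_mono) auto
    qed (use a0 Lg in simp)
    also have "\<dots> \<le> (sb\<^sup>2 / 2) * (tau * S) / (al\<^sup>2 * Lg)"
    proof (rule divide_right_mono)
      have "su \<le> sb\<^sup>2 / 2"
      proof -
        have "0 \<le> (su - 1/2)\<^sup>2" by simp
        then show ?thesis by (simp add: sb_def power2_eq_square algebra_simps)
      qed
      moreover have "tau * U \<le> tau * S" using US t0 by (rule mult_left_mono)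
      ultimately have "su * (tau * U) \<le> (sb\<^sup>2 / 2) * (tau * S)"
        using su t0 U0 by (rule_tac mult_mono) auto
      then show "1 * (su * (tau * U)) \<le> (sb\<^sup>2 / 2) * (tau * S)" by simp
    qed (use a0 Lg in simp)
    also have "\<dots> = tau * S * sb\<^sup>2 / (2 * al\<^sup>2 * Lg)" by (simp add: mult_ac)
    finally show ?thesis using P2 by linarith
  qed
qed

lemma c_real:
  fixes et sc kc kg W C :: real
  assumes "0 < et" "et < 1" "0 < sc" "sc < 1" "0 < kc" "0 \<le> C" "C \<le> kc" "0 \<le> W" "W \<le> kg * C" "0 < kg"
  shows "et * (sc / (2 * kc * (1 + kg\<^sup>2))) * W\<^sup>2 \<le> C"
proof -
  define D where "D = 1 + kg\<^sup>2"
  have d: "0 < D" by (simp add: add_pos_nonneg D_def)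
  have "W\<^sup>2 \<le> (kg * C)\<^sup>2" using assms by (intro power_mono) auto
  also have "\<dots> = kg\<^sup>2 * C * C" by (simp add: power2_eq_square)
  also have "\<dots> \<le> D * C * kc" using assms unfolding D_def by (intro mult_mono) auto
  finally have W2: "W\<^sup>2 \<le> D * C * kc" .
  have "et * (sc / (2 * kc * D)) * W\<^sup>2 \<le> et * (sc / (2 * kc * D)) * (D * C * kc)"
    using W2 assms d by (intro mult_left_mono) auto
  also have "\<dots> = (et * sc / 2) * C" using d assms by (simp add: field_simps)
  also have "\<dots> \<le> 1 * C"
  proof (rule mult_right_mono)
    have "et * sc \<le> 1 * 1" using assms by (intro mult_mono) auto
    then show "et * sc / 2 \<le> 1" by simp
  qed (use assms in simp)
  finally show ?thesis by (simp add: D_def)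
qed


locale alg =
  fixes f :: "real^'n \<Rightarrow> real" and g :: "real^'n \<Rightarrow> real^'n"
    and c :: "real^'n \<Rightarrow> real^'m" and J :: "real^'n \<Rightarrow> real^'n^'m"
    and r :: "real^'n \<Rightarrow> real"
    and x v u s gr :: "nat \<Rightarrow> real^'n" and y :: "nat \<Rightarrow> real^'m"
    and alpha tau betac :: "nat \<Rightarrow> real"
    and tau_m1 kappa_v sigma_c eps_tau xi eta sigma_u :: real
    and X :: "(real^'n) set"
    and f_inf kappa_gf kappa_c kappa_gc kappa_dr L_g L_J :: real
  assumes mn: "CARD('m) \<le> CARD('n)"
    and f_deriv: "\<forall>z. GDERIV f z :> g z" and g_cont: "continuous_on UNIV g"
    and c_deriv: "\<forall>z. (c has_derivative (\<lambda>h. J z *v h)) (at z)"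
    and J_cont: "continuous_on UNIV J"
    and r_nonneg: "\<forall>z. r z \<ge> 0" and r_convex: "convex_on UNIV r"
    and alpha0: "alpha 0 > 0" and taum1: "tau_m1 > 0"
    and kv: "kappa_v > 0"
    and sc: "0 < sigma_c" "sigma_c < 1"
    and et: "0 < eps_tau" "eps_tau < 1"
    and xi: "0 < xi" "xi < 1"
    and eta: "0 < eta" "eta < 1"
    and su: "0 < sigma_u" "sigma_u \<le> 1/2"
    and step1a: "\<forall>k. transpose (J (x k)) *v c (x k) \<noteq> 0 \<longrightarrow>
        v k \<in> range (\<lambda>w. transpose (J (x k)) *v w)
      \<and> norm (v k) \<le> kappa_v * alpha k * norm (transpose (J (x k)) *v c (x k))
      \<and> 0 \<le> betac k \<and> betac k \<le> kappa_v * alpha k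
      \<and> (\<forall>\<beta>. 0 \<le> \<beta> \<and> \<beta> \<le> kappa_v * alpha k \<longrightarrow>
            (1/2) * (norm (c (x k) - betac k *\<^sub>R (J (x k) *v (transpose (J (x k)) *v c (x k)))))\<^sup>2
          \<le> (1/2) * (norm (c (x k) - \<beta> *\<^sub>R (J (x k) *v (transpose (J (x k)) *v c (x k)))))\<^sup>2)
      \<and> norm (c (x k) + J (x k) *v v k)
          \<le> norm (c (x k) + J (x k) *v (- (betac k *\<^sub>R (transpose (J (x k)) *v c (x k)))))"
    and step1b: "\<forall>k. transpose (J (x k)) *v c (x k) = 0 \<longrightarrow> v k = 0 \<and> c (x k) = 0"
    and step2: "\<forall>k. J (x k) *v u k = 0 \<and>
       (\<forall>w. J (x k) *v w = 0 \<longrightarrow>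
          g (x k) \<bullet> u k + (norm (u k))\<^sup>2 / (2 * alpha k) + r (x k + v k + u k)
          \<le> g (x k) \<bullet> w + (norm w)\<^sup>2 / (2 * alpha k) + r (x k + v k + w))"
    and s_def: "\<forall>k. s k = v k + u k" and s_nz: "\<forall>k. s k \<noteq> 0"
    and opt: "\<forall>k. gr k \<in> subdiff r (x k + s k) \<and>
       g (x k) + (1 / alpha k) *\<^sub>R u k + gr k - transpose (J (x k)) *v y k = 0"
    and step3: "\<forall>k. let tp = (if k = 0 then tau_m1 else tau (k - 1));
          D = g (x k) \<bullet> s k + (sigma_u + 1/2) * (norm (s k))\<^sup>2 / alpha k + r (x k + s k) - r (x k)
        in (if D \<le> 0 then tau k = tp
            else (let tt = (1 - sigma_c) * (norm (c (x k)) - norm (c (x k) + J (x k) *v v k)) / D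
                  in tau k = (if tp \<le> tt then tp else min ((1 - eps_tau) * tp) tt)))"
    and step4: "\<forall>k. let dq = - tau k * (g (x k) \<bullet> s k + (norm (s k))\<^sup>2 / (2 * alpha k)
                              + r (x k + s k) - r (x k))
                   + norm (c (x k)) - norm (c (x k) + J (x k) *v s k);
          Phi = (\<lambda>z. tau k * (f z + r z) + norm (c z))
        in (if Phi (x k + s k) \<le> Phi (x k) - eta * dq
            then x (Suc k) = x k + s k \<and> alpha (Suc k) = alpha k
            else x (Suc k) = x k \<and> alpha (Suc k) = xi * alpha k)"
    and X_open: "open X" and X_convex: "convex X"
    and X_iter: "\<forall>k. x k \<in> X \<and> x k + s k \<in> X"
    and consts_pos: "kappa_gf > 0" "kappa_c > 0" "kappa_gc > 0" "kappa_dr > 0" "L_g > 0" "L_J > 0"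
    and f_lb: "\<forall>z\<in>X. f z \<ge> f_inf"
    and g_bd: "\<forall>z\<in>X. norm (g z) \<le> kappa_gf"
    and c_bd: "\<forall>z\<in>X. norm (c z) \<le> kappa_c"
    and J_bd: "\<forall>z\<in>X. onorm (\<lambda>h. J z *v h) \<le> kappa_gc"
    and dr_bd: "\<forall>z\<in>X. \<forall>w\<in>subdiff r z. norm w \<le> kappa_dr"
    and g_lip: "\<forall>z\<in>X. \<forall>w\<in>X. norm (g z - g w) \<le> L_g * norm (z - w)"
    and J_lip: "\<forall>z\<in>X. \<forall>w\<in>X. onorm (\<lambda>h. (J z - J w) *v h) \<le> L_J * norm (z - w)"
begin
definition "wv k = transpose (J (x k)) *v c (x k)"
definition "tp k = (if k = 0 then tau_m1 else tau (k - 1))"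
definition "Dv k = g (x k) \<bullet> s k + (sigma_u + 1/2) * (norm (s k))\<^sup>2 / alpha k + r (x k + s k) - r (x k)"
definition "cdec k = norm (c (x k)) - norm (c (x k) + J (x k) *v v k)"
definition "tt k = (1 - sigma_c) * cdec k / Dv k"
definition "dq k = - tau k * (g (x k) \<bullet> s k + (norm (s k))\<^sup>2 / (2 * alpha k)
                              + r (x k + s k) - r (x k))
                   + norm (c (x k)) - norm (c (x k) + J (x k) *v s k)"
definition "Phik k z = tau k * (f z + r z) + norm (c z)"
definition "succ k = (Phik k (x k + s k) \<le> Phik k (x k) - eta * dq k)"
definition "Pt k = tau k * (f (x k) - f_inf + r (x k)) + norm (c (x k))"

lemma tau_eq: "tau k = (if Dv k \<le> 0 then tp k else if tp k \<le> tt k then tp k else min ((1 - eps_tau) * tp k) (tt k))"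
  using step3 unfolding Let_def tp_def Dv_def tt_def cdec_def by (auto split: if_splits)

lemma step_succ: "succ k \<Longrightarrow> x (Suc k) = x k + s k \<and> alpha (Suc k) = alpha k"
  using step4 unfolding Let_def succ_def Phik_def dq_def by (auto split: if_splits)
lemma step_fail: "\<not> succ k \<Longrightarrow> x (Suc k) = x k \<and> alpha (Suc k) = xi * alpha k"
  using step4 unfolding Let_def succ_def Phik_def dq_def by (auto split: if_splits)

lemma alpha_pos: "alpha k > 0"
proof (induction k)
  case 0 then show ?case using alpha0 by simp
next
  case (Suc k) then show ?case using step_succ[of k] step_fail[of k] xi by (cases "succ k") auto
qed

lemma alpha_le0: "alpha k \<le> alpha 0"
proof (induction k)
  case (Suc k) then show ?case using step_succ[of k] step_fail[of k] xi alpha_pos[of k]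
    by (cases "succ k") (auto intro: order.trans[OF _ Suc.IH] simp: mult_le_cancel_right1)
qed simp

lemma s1a: "wv k \<noteq> 0 \<Longrightarrow>
        v k \<in> range (\<lambda>w. transpose (J (x k)) *v w)
      \<and> norm (v k) \<le> kappa_v * alpha k * norm (wv k)
      \<and> 0 \<le> betac k \<and> betac k \<le> kappa_v * alpha k
      \<and> (\<forall>\<beta>. 0 \<le> \<beta> \<and> \<beta> \<le> kappa_v * alpha k \<longrightarrow>
            (1/2) * (norm (c (x k) - betac k *\<^sub>R (J (x k) *v wv k)))\<^sup>2
          \<le> (1/2) * (norm (c (x k) - \<beta> *\<^sub>R (J (x k) *v wv k)))\<^sup>2)
      \<and> norm (c (x k) + J (x k) *v v k)
          \<le> norm (c (x k) + J (x k) *v (- (betac k *\<^sub>R wv k)))"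
  using step1a unfolding wv_def by blast

lemma s1a_min: "wv k \<noteq> 0 \<Longrightarrow> 0 \<le> b \<Longrightarrow> b \<le> kappa_v * alpha k \<Longrightarrow>
   norm (c (x k) + J (x k) *v v k) \<le> norm (c (x k) - b *\<^sub>R (J (x k) *v wv k))"
proof -
  assume h: "wv k \<noteq> 0" "0 \<le> b" "b \<le> kappa_v * alpha k"
  note S = s1a[OF h(1)]
  have a: "norm (c (x k) + J (x k) *v v k) \<le> norm (c (x k) - betac k *\<^sub>R (J (x k) *v wv k))"
    using S by (simp add: mv_neg mv_scale)
  have "(1/2) * (norm (c (x k) - betac k *\<^sub>R (J (x k) *v wv k)))\<^sup>2
          \<le> (1/2) * (norm (c (x k) - b *\<^sub>R (J (x k) *v wv k)))\<^sup>2"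
    using S h by blast
  then have "norm (c (x k) - betac k *\<^sub>R (J (x k) *v wv k)) \<le> norm (c (x k) - b *\<^sub>R (J (x k) *v wv k))"
    by (simp add: power_mono_iff)
  with a show ?thesis by linarith
qed

lemma wv0: "wv k = 0 \<Longrightarrow> v k = 0 \<and> c (x k) = 0"
  using step1b unfolding wv_def by blast

lemma Jv_ineq: "norm (c (x k) + J (x k) *v v k) \<le> norm (c (x k))"
proof (cases "wv k = 0")
  case True then show ?thesis using wv0 by simp
next
  case False
  then show ?thesis using s1a_min[OF False, of 0] alpha_pos[of k] kv by simp
qed

lemma cdec_nonneg: "0 \<le> cdec k" using Jv_ineq by (simp add: cdec_def)

lemma tau_facts: "0 \<le> tau k \<and> tau k \<le> tp k"
proof (induction k)
  case 0
  have "0 \<le> tp 0" using taum1 by (simp add: tp_def)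
  moreover have "Dv 0 > 0 \<Longrightarrow> 0 \<le> tt 0" using cdec_nonneg[of 0] sc by (simp add: tt_def)
  ultimately show ?case using tau_eq[of 0] et by (auto simp: min_def)
next
  case (Suc k)
  have "0 \<le> tp (Suc k)" using Suc by (simp add: tp_def)
  moreover have "Dv (Suc k) > 0 \<Longrightarrow> 0 \<le> tt (Suc k)" using cdec_nonneg[of "Suc k"] sc by (simp add: tt_def)
  ultimately show ?case using tau_eq[of "Suc k"] et by (auto simp: min_def)
qed

lemma tau_nonneg: "0 \<le> tau k" using tau_facts by blast
lemma tau_Suc: "tau (Suc k) \<le> tau k" using tau_facts[of "Suc k"] by (simp add: tp_def)
lemma tau_le_m1: "tau k \<le> tau_m1"
  by (induction k) (use tau_facts[of 0] tau_Suc in \<open>auto simp: tp_def intro: order.trans\<close>)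
lemma tau_dec: "decseq tau" using tau_Suc by (simp add: decseq_SucI)

lemma tauD: "tau k * Dv k \<le> (1 - sigma_c) * cdec k"
proof (cases "Dv k \<le> 0")
  case True
  then have "tau k * Dv k \<le> 0" using tau_nonneg[of k] by (simp add: mult_nonneg_nonpos)
  also have "0 \<le> (1 - sigma_c) * cdec k" using cdec_nonneg[of k] sc by simp
  finally show ?thesis .
next
  case False
  then have "tau k \<le> tt k" using tau_eq[of k] by (auto simp: min_def)
  then have "tau k * Dv k \<le> tt k * Dv k" using False by (simp add: mult_right_mono)
  also have "\<dots> = (1 - sigma_c) * cdec k" using False by (simp add: tt_def)
  finally show ?thesis .
qed

lemma Ju: "J (x k) *v u k = 0" using step2 by blast
lemma Js: "J (x k) *v s k = J (x k) *v v k"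
  using Ju[of k] s_def by (simp add: matrix_vector_right_distrib)

lemma uv_orth: "u k \<bullet> v k = 0"
proof (cases "wv k = 0")
  case True then show ?thesis using wv0 by simp
next
  case False
  then obtain z where z: "v k = transpose (J (x k)) *v z" using s1a[of k] by blast
  have "v k \<bullet> u k = z \<bullet> (J (x k) *v u k)" unfolding z by (rule mv_adj)
  then show ?thesis using Ju[of k] by (simp add: inner_commute)
qed

lemma s_norm: "(norm (s k))\<^sup>2 = (norm (u k))\<^sup>2 + (norm (v k))\<^sup>2"
proof -
  have "(norm (s k))\<^sup>2 = (v k + u k) \<bullet> (v k + u k)" using s_def by (simp add: dot_square_norm)
  also have "\<dots> = v k \<bullet> v k + u k \<bullet> u k + 2 * (u k \<bullet> v k)"
    by (simp add: inner_add_left inner_add_right inner_commute)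
  finally show ?thesis using uv_orth[of k] by (simp add: dot_square_norm)
qed

lemma u_le_s: "norm (u k) \<le> norm (s k)"
  using s_norm[of k] by (metis le_add_same_cancel1 norm_ge_zero power2_le_imp_le zero_le_power2)

lemma opt_k: "gr k \<in> subdiff r (x k + s k)"
   "g (x k) + (1 / alpha k) *\<^sub>R u k + gr k - transpose (J (x k)) *v y k = 0"
  using opt by auto

lemma chi1_eq: "norm (g (x k) + gr k - transpose (J (x k)) *v y k) = norm (u k) / alpha k"
proof -
  have "g (x k) + gr k - transpose (J (x k)) *v y k = - ((1 / alpha k) *\<^sub>R u k)"
    using opt_k(2)[of k] by (simp add: algebra_simps eq_neg_iff_add_eq_0)
  then show ?thesis using alpha_pos[of k] by simp
qed

lemma u_bound: "norm (u k) \<le> alpha k * (kappa_gf + kappa_dr)"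
proof -
  have ak: "alpha k > 0" using alpha_pos by simp
  have eq: "(1 / alpha k) *\<^sub>R u k = transpose (J (x k)) *v y k - (g (x k) + gr k)"
    using opt_k(2)[of k] by (simp add: algebra_simps eq_neg_iff_add_eq_0)
  have "(transpose (J (x k)) *v y k) \<bullet> u k = 0" by (metis mv_adj Ju inner_zero_right)
  then have "((1 / alpha k) *\<^sub>R u k) \<bullet> u k = - ((g (x k) + gr k) \<bullet> u k)"
    unfolding eq by (simp add: inner_diff_left)
  then have "(norm (u k))\<^sup>2 / alpha k = - ((g (x k) + gr k) \<bullet> u k)"
    by (simp add: dot_square_norm)
  also have "\<dots> \<le> norm (g (x k) + gr k) * norm (u k)"
    by (metis abs_le_D2 Cauchy_Schwarz_ineq2 abs_minus_cancel)
  also have "\<dots> \<le> (kappa_gf + kappa_dr) * norm (u k)"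
  proof (rule mult_right_mono)
    have "norm (g (x k)) \<le> kappa_gf" using g_bd X_iter by blast
    moreover have "norm (gr k) \<le> kappa_dr" using dr_bd X_iter opt_k(1) by blast
    ultimately show "norm (g (x k) + gr k) \<le> kappa_gf + kappa_dr" by (meson add_mono norm_triangle_ineq order_trans)
  qed simp
  finally have "norm (u k) * norm (u k) \<le> alpha k * ((kappa_gf + kappa_dr) * norm (u k))"
    using ak by (simp add: power2_eq_square field_simps)
  then have "norm (u k) * norm (u k) \<le> (alpha k * (kappa_gf + kappa_dr)) * norm (u k)" by (simp add: algebra_simps)
  then show ?thesis by (cases "norm (u k) = 0") (use ak consts_pos in auto)
qed

lemma wv_bound: "norm (wv k) \<le> kappa_gc * norm (c (x k))"
proof -
  have Jb: "onorm (\<lambda>h. J (x k) *v h) \<le> kappa_gc" using J_bd X_iter by blast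
  have "(norm (wv k))\<^sup>2 = c (x k) \<bullet> (J (x k) *v wv k)"
    unfolding wv_def by (metis dot_square_norm mv_adj wv_def)
  also have "\<dots> \<le> norm (c (x k)) * norm (J (x k) *v wv k)" by (rule norm_cauchy_schwarz)
  also have "\<dots> \<le> norm (c (x k)) * (kappa_gc * norm (wv k))"
    by (intro mult_left_mono order.trans[OF mv_onorm] mult_right_mono Jb) auto
  finally have "norm (wv k) * norm (wv k) \<le> (kappa_gc * norm (c (x k))) * norm (wv k)"
    by (simp add: power2_eq_square algebra_simps)
  then show ?thesis by (cases "norm (wv k) = 0") (use consts_pos in auto)
qed

lemma v_bound: "norm (v k) \<le> kappa_v * alpha k * norm (wv k)"
  using s1a[of k] wv0[of k] by (cases "wv k = 0") auto

lemma cauchy: "cdec k \<ge> (norm (wv k))\<^sup>2 * min (1 / (1 + kappa_gc\<^sup>2)) (kappa_v * alpha k) / (2 * kappa_c)"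
proof (cases "wv k = 0")
  case True then show ?thesis using cdec_nonneg by simp
next
  case False
  define b where "b = min (1 / (1 + kappa_gc\<^sup>2)) (kappa_v * alpha k)"
  define w where "w = wv k"
  define cc where "cc = c (x k)"
  define Jw where "Jw = J (x k) *v w"
  have b0: "0 \<le> b" using alpha_pos[of k] kv by (simp add: b_def)
  have b1: "b \<le> kappa_v * alpha k" by (simp add: b_def)
  have "b \<le> 1 / (1 + kappa_gc\<^sup>2)" by (simp add: b_def)
  moreover have "0 < 1 + kappa_gc\<^sup>2" by (simp add: add_pos_nonneg)
  ultimately have b2: "b * (1 + kappa_gc\<^sup>2) \<le> 1" by (simp add: le_divide_eq)
  have Jb: "onorm (\<lambda>h. J (x k) *v h) \<le> kappa_gc" using J_bd X_iter by blast
  have nJw: "norm Jw \<le> kappa_gc * norm w"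
    unfolding Jw_def by (intro order.trans[OF mv_onorm] mult_right_mono Jb) auto
  have cJw: "cc \<bullet> Jw = (norm w)\<^sup>2"
    unfolding Jw_def cc_def w_def by (metis dot_square_norm mv_adj wv_def)
  have "(norm (c (x k) + J (x k) *v v k))\<^sup>2 \<le> (norm (cc - b *\<^sub>R Jw))\<^sup>2"
    using s1a_min[OF False b0 b1] norm_ge_zero power_mono unfolding cc_def Jw_def w_def by blast
  also have "\<dots> = (cc - b *\<^sub>R Jw) \<bullet> (cc - b *\<^sub>R Jw)" by (simp add: dot_square_norm)
  also have "\<dots> = cc \<bullet> cc - 2 * b * (cc \<bullet> Jw) + b\<^sup>2 * (Jw \<bullet> Jw)"
    by (simp add: inner_diff_left inner_diff_right inner_commute power2_eq_square algebra_simps)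
  also have "\<dots> = (norm cc)\<^sup>2 - 2 * b * (cc \<bullet> Jw) + b\<^sup>2 * (norm Jw)\<^sup>2"
    by (simp add: dot_square_norm)
  also have "\<dots> \<le> (norm cc)\<^sup>2 - 2 * b * (norm w)\<^sup>2 + b\<^sup>2 * (kappa_gc\<^sup>2 * (norm w)\<^sup>2)"
  proof -
    have "(norm Jw)\<^sup>2 \<le> (kappa_gc * norm w)\<^sup>2" using nJw norm_ge_zero power_mono by blast
    then show ?thesis using cJw by (simp add: power_mult_distrib mult_left_mono)
  qed
  also have "\<dots> \<le> (norm cc)\<^sup>2 - b * (norm w)\<^sup>2"
  proof -
    have "b * (b * kappa_gc\<^sup>2) \<le> b * 1" using b2 b0 by (intro mult_left_mono) (auto simp: algebra_simps)
    then have "b\<^sup>2 * kappa_gc\<^sup>2 * (norm w)\<^sup>2 \<le> b * (norm w)\<^sup>2"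
      by (intro mult_right_mono) (auto simp: power2_eq_square algebra_simps)
    then show ?thesis by (simp add: algebra_simps)
  qed
  finally have sq: "(norm (c (x k) + J (x k) *v v k))\<^sup>2 \<le> (norm cc)\<^sup>2 - b * (norm w)\<^sup>2" .
  have "cc \<noteq> 0"
  proof
    assume "cc = 0" then have "wv k = 0" by (simp add: wv_def cc_def)
    with False show False by simp
  qed
  then have ccpos: "norm cc > 0" by simp
  have ccb: "norm cc \<le> kappa_c" using c_bd X_iter unfolding cc_def by blast
  define a where "a = norm (c (x k) + J (x k) *v v k)"
  have a0: "0 \<le> a" "a \<le> norm cc" using Jv_ineq[of k] by (auto simp: a_def cc_def)
  have "b * (norm w)\<^sup>2 \<le> (norm cc)\<^sup>2 - a\<^sup>2" using sq by (simp add: a_def)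
  also have "\<dots> = (norm cc - a) * (norm cc + a)" by (simp add: power2_eq_square algebra_simps)
  also have "\<dots> \<le> (norm cc - a) * (2 * kappa_c)"
    using a0 ccb by (intro mult_left_mono) auto
  finally have "b * (norm w)\<^sup>2 / (2 * kappa_c) \<le> norm cc - a"
    using consts_pos by (simp add: field_simps)
  then show ?thesis by (simp add: cdec_def a_def cc_def w_def b_def mult.commute)
qed

lemma dq_eq: "dq k = - tau k * Dv k + tau k * sigma_u * (norm (s k))\<^sup>2 / alpha k + cdec k"
  unfolding dq_def Dv_def cdec_def Js using alpha_pos[of k] by (simp add: field_simps)

lemma dq_lb: "dq k \<ge> tau k * sigma_u * (norm (s k))\<^sup>2 / alpha k + sigma_c * cdec k"
  using dq_eq[of k] tauD[of k] by (simp add: algebra_simps)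

lemma dq_nonneg: "dq k \<ge> 0"
proof -
  have "0 \<le> tau k * sigma_u * (norm (s k))\<^sup>2 / alpha k"
    using tau_nonneg su alpha_pos[of k] by simp
  moreover have "0 \<le> sigma_c * cdec k" using sc cdec_nonneg by simp
  ultimately show ?thesis using dq_lb[of k] by linarith
qed

lemma merit_bound: "Phik k (x k + s k) - Phik k (x k)
   \<le> - dq k + (tau k * L_g + L_J - tau k / alpha k) * (norm (s k))\<^sup>2 / 2"
proof -
  have xX: "x k \<in> X" and yX: "x k + s k \<in> X" using X_iter by auto
  have fb: "f (x k + s k) \<le> f (x k) + g (x k) \<bullet> s k + L_g / 2 * (norm (s k))\<^sup>2"
    using descent_f[OF f_deriv X_convex xX yX g_lip] by simp
  have cb0: "norm (c (x k + s k) - c (x k) - J (x k) *v s k) \<le> L_J / 2 * (norm (s k))\<^sup>2"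
    using descent_c[OF c_deriv X_convex xX yX _ J_lip] consts_pos by simp
  have cb: "norm (c (x k + s k)) \<le> norm (c (x k) + J (x k) *v s k) + L_J / 2 * (norm (s k))\<^sup>2"
  proof -
    have "norm (c (x k + s k)) \<le> norm (c (x k) + J (x k) *v s k) + norm (c (x k + s k) - c (x k) - J (x k) *v s k)"
    proof -
      have "c (x k + s k) = (c (x k) + J (x k) *v s k) + (c (x k + s k) - c (x k) - J (x k) *v s k)" by simp
      then show ?thesis by (metis norm_triangle_ineq)
    qed
    then show ?thesis using cb0 by linarith
  qed
  have t0: "0 \<le> tau k" by (rule tau_nonneg)
  have H1: "tau k * f (x k + s k) \<le> tau k * (f (x k) + g (x k) \<bullet> s k + L_g / 2 * (norm (s k))\<^sup>2)"
    using fb t0 by (rule mult_left_mono)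
  have aux: "\<And>t fs fx gs Lg S cn cj LJ rs rx cx a :: real. a > 0 \<Longrightarrow>
     t * fs \<le> t * (fx + gs + Lg / 2 * S) \<Longrightarrow> cn \<le> cj + LJ / 2 * S \<Longrightarrow>
     (t * (fs + rs) + cn) - (t * (fx + rx) + cx) \<le> - (- t * (gs + S / (2 * a) + rs - rx) + cx - cj) + (t * Lg + LJ - t / a) * S / 2"
  proof -
    fix t fs fx gs Lg S cn cj LJ rs rx cx a :: real
    assume a: "a > 0" and h1: "t * fs \<le> t * (fx + gs + Lg / 2 * S)" and h2: "cn \<le> cj + LJ / 2 * S"
    have e: "- (- t * (gs + S / (2 * a) + rs - rx) + cx - cj) + (t * Lg + LJ - t / a) * S / 2
       = t*gs + t*rs - t*rx + cj - cx + t*Lg*S/2 + LJ*S/2" using a by (simp add: field_simps)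
    have h1': "t * fs \<le> t * fx + t * gs + t * Lg * S / 2" using h1 by (simp add: algebra_simps)
    show "(t * (fs + rs) + cn) - (t * (fx + rx) + cx) \<le> - (- t * (gs + S / (2 * a) + rs - rx) + cx - cj) + (t * Lg + LJ - t / a) * S / 2"
      unfolding e using h1' h2 by (simp add: algebra_simps)
  qed
  show ?thesis unfolding Phik_def dq_def by (rule aux[OF alpha_pos H1 cb])
qed

lemma accept: "(1 - eta) * dq k \<ge> (tau k * L_g + L_J - tau k / alpha k) * (norm (s k))\<^sup>2 / 2 \<Longrightarrow> succ k"
proof -
  assume h: "(1 - eta) * dq k \<ge> (tau k * L_g + L_J - tau k / alpha k) * (norm (s k))\<^sup>2 / 2"
  have aux: "\<And>a b d e et :: real. a - b \<le> - d + e \<Longrightarrow> e \<le> (1 - et) * d \<Longrightarrow> a \<le> b - et * d"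
    by (simp add: algebra_simps)
  show ?thesis unfolding succ_def by (rule aux[OF merit_bound h])
qed

lemma accept2: "alpha k * (tau k * L_g + L_J) \<le> tau k \<Longrightarrow> succ k"
proof (rule accept)
  assume h: "alpha k * (tau k * L_g + L_J) \<le> tau k"
  have "tau k * L_g + L_J - tau k / alpha k \<le> 0" using h alpha_pos[of k] by (simp add: field_simps)
  then have "(tau k * L_g + L_J - tau k / alpha k) * (norm (s k))\<^sup>2 / 2 \<le> 0"
    by (simp add: mult_nonpos_nonneg)
  also have "0 \<le> (1 - eta) * dq k" using eta dq_nonneg[of k] by simp
  finally show "(1 - eta) * dq k \<ge> (tau k * L_g + L_J - tau k / alpha k) * (norm (s k))\<^sup>2 / 2" .
qed

lemma Pt_nonneg: "0 \<le> Pt k"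
proof -
  have "0 \<le> f (x k) - f_inf + r (x k)" using f_lb X_iter r_nonneg by (smt (verit))
  then show ?thesis unfolding Pt_def using tau_nonneg[of k] by simp
qed

lemma Pt_step: "Pt (Suc k) \<le> Pt k - (if succ k then eta * dq k else 0)"
proof -
  have b: "0 \<le> f (x (Suc k)) - f_inf + r (x (Suc k))" using f_lb X_iter r_nonneg by (smt (verit))
  have "Pt (Suc k) \<le> tau k * (f (x (Suc k)) - f_inf + r (x (Suc k))) + norm (c (x (Suc k)))"
    unfolding Pt_def using mult_right_mono[OF tau_Suc[of k] b] by simp
  also have "\<dots> \<le> Pt k - (if succ k then eta * dq k else 0)"
  proof (cases "succ k")
    case True
    then have "x (Suc k) = x k + s k" using step_succ by blast
    then show ?thesis using True unfolding succ_def Phik_def Pt_def by (simp add: algebra_simps)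
  next
    case False
    then have "x (Suc k) = x k" using step_fail by blast
    then show ?thesis using False unfolding Pt_def by simp
  qed
  finally show ?thesis .
qed

definition "chib k = max (norm (g (x k) + gr k - transpose (J (x k)) *v y k)) (norm (wv k))"

lemma chib_eq: "chib k = max (norm (u k) / alpha k) (norm (wv k))"
  unfolding chib_def chi1_eq ..

definition "amin t = min (alpha 0) (xi * t / (t * L_g + L_J))"
definition "kPhi t = eta * min (min (sigma_u * t * amin t) (sigma_c / (2 * kappa_c * (1 + kappa_gc\<^sup>2))))
                               (sigma_c * kappa_v * amin t / (2 * kappa_c))"

context
  fixes tmin :: real
  assumes tm0: "tmin > 0" and tmk: "\<forall>k. tau k \<ge> tmin"
begin

lemma fail_alpha: "\<not> succ k \<Longrightarrow> alpha k > tmin / (tmin * L_g + L_J)"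
proof (rule ccontr)
  assume ns: "\<not> succ k" and "\<not> alpha k > tmin / (tmin * L_g + L_J)"
  then have h: "alpha k \<le> tmin / (tmin * L_g + L_J)" by simp
  have den: "tmin * L_g + L_J > 0" using tm0 consts_pos by (simp add: add_pos_pos)
  have h2: "alpha k * (tmin * L_g + L_J) \<le> tmin" using h den by (simp add: le_divide_eq)
  have ap: "alpha k > 0" by (rule alpha_pos)
  have q: "tmin * (alpha k * L_g - 1) + alpha k * L_J \<le> 0" using h2 by (simp add: algebra_simps)
  have "alpha k * L_J > 0" using ap consts_pos by simp
  then have neg: "alpha k * L_g - 1 \<le> 0" using q tm0
    by (smt (verit, ccfv_SIG) mult_pos_pos)
  have "tau k * (alpha k * L_g - 1) \<le> tmin * (alpha k * L_g - 1)"
    using tmk neg by (simp add: mult_right_mono_neg)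
  then have "alpha k * (tau k * L_g + L_J) \<le> tau k" using q by (simp add: algebra_simps)
  then have "succ k" by (rule accept2)
  with ns show False by simp
qed

lemma alpha_lb: "alpha k \<ge> min (alpha 0) (xi * tmin / (tmin * L_g + L_J))"
proof (induction k)
  case 0 then show ?case by simp
next
  case (Suc k)
  show ?case
  proof (cases "succ k")
    case True then show ?thesis using step_succ[of k] Suc by simp
  next
    case False
    then have "alpha k > tmin / (tmin * L_g + L_J)" by (rule fail_alpha)
    then have "xi * alpha k \<ge> xi * (tmin / (tmin * L_g + L_J))" using xi by (intro mult_left_mono) auto
    then have "xi * alpha k \<ge> xi * tmin / (tmin * L_g + L_J)" by simp
    then show ?thesis using step_fail[OF False] by (simp add: min_le_iff_disj)
  qed
qed


lemma amin_pos: "amin tmin > 0"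
  using alpha0 xi tm0 consts_pos by (simp add: amin_def add_pos_pos)

lemma alpha_amin: "alpha k \<ge> amin tmin" using alpha_lb by (simp add: amin_def)

lemma dq_chib: "dq k \<ge> (kPhi tmin / eta) * (chib k)\<^sup>2"
proof -
  define m1 where "m1 = sigma_u * tmin * amin tmin"
  define m2 where "m2 = sigma_c / (2 * kappa_c * (1 + kappa_gc\<^sup>2))"
  define m3 where "m3 = sigma_c * kappa_v * amin tmin / (2 * kappa_c)"
  define m where "m = min (min m1 m2) m3"
  have km: "kPhi tmin / eta = m" using eta by (simp add: kPhi_def m_def m1_def m2_def m3_def)
  have ak: "alpha k > 0" by (rule alpha_pos)
  have aa: "alpha k \<ge> amin tmin" by (rule alpha_amin)
  have am: "amin tmin > 0" by (rule amin_pos)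
  define q1 where "q1 = norm (u k) / alpha k"
  define q2 where "q2 = norm (wv k)"
  have m0: "m \<ge> 0" using su sc kv am consts_pos tm0 by (simp add: m_def m1_def m2_def m3_def add_pos_nonneg)
  have A: "tau k * sigma_u * (norm (s k))\<^sup>2 / alpha k \<ge> m1 * q1\<^sup>2"
  proof -
    have "tmin * sigma_u * (norm (u k))\<^sup>2 \<le> tau k * sigma_u * (norm (s k))\<^sup>2"
    proof (rule mult_mono)
      show "tmin * sigma_u \<le> tau k * sigma_u" using tmk su by (simp add: mult_right_mono)
      show "(norm (u k))\<^sup>2 \<le> (norm (s k))\<^sup>2" using u_le_s[of k] norm_ge_zero power_mono by blast
    qed (use tm0 su tau_nonneg[of k] in auto)
    then have "tmin * sigma_u * (norm (u k))\<^sup>2 / alpha k \<le> tau k * sigma_u * (norm (s k))\<^sup>2 / alpha k"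
      using ak by (simp add: divide_right_mono)
    moreover have "tmin * sigma_u * (norm (u k))\<^sup>2 / alpha k = tmin * sigma_u * alpha k * q1\<^sup>2"
      using ak by (simp add: q1_def power2_eq_square field_simps)
    moreover have "m1 * q1\<^sup>2 \<le> tmin * sigma_u * alpha k * q1\<^sup>2"
      unfolding m1_def using aa tm0 su by (intro mult_right_mono) auto
    ultimately show ?thesis by linarith
  qed
  have B: "sigma_c * cdec k \<ge> min m2 m3 * q2\<^sup>2"
  proof -
    have "sigma_c * ((norm (wv k))\<^sup>2 * min (1 / (1 + kappa_gc\<^sup>2)) (kappa_v * alpha k) / (2 * kappa_c)) \<le> sigma_c * cdec k"
      using cauchy[of k] sc by (intro mult_left_mono) auto
    moreover have "sigma_c * ((norm (wv k))\<^sup>2 * min (1 / (1 + kappa_gc\<^sup>2)) (kappa_v * alpha k) / (2 * kappa_c))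
        = q2\<^sup>2 * min (sigma_c / (2 * kappa_c * (1 + kappa_gc\<^sup>2))) (sigma_c * kappa_v * alpha k / (2 * kappa_c))"
    proof -
      have p: "sigma_c / (2 * kappa_c) > 0" using sc consts_pos by simp
      have "sigma_c * min (1 / (1 + kappa_gc\<^sup>2)) (kappa_v * alpha k) / (2 * kappa_c)
          = (sigma_c / (2 * kappa_c)) * min (1 / (1 + kappa_gc\<^sup>2)) (kappa_v * alpha k)" by simp
      also have "\<dots> = min ((sigma_c / (2 * kappa_c)) * (1 / (1 + kappa_gc\<^sup>2))) ((sigma_c / (2 * kappa_c)) * (kappa_v * alpha k))"
        using p by (simp add: min_mult_distrib_left)
      also have "\<dots> = min (sigma_c / (2 * kappa_c * (1 + kappa_gc\<^sup>2))) (sigma_c * kappa_v * alpha k / (2 * kappa_c))"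
        by simp
      finally have e: "sigma_c * min (1 / (1 + kappa_gc\<^sup>2)) (kappa_v * alpha k) / (2 * kappa_c) =
         min (sigma_c / (2 * kappa_c * (1 + kappa_gc\<^sup>2))) (sigma_c * kappa_v * alpha k / (2 * kappa_c))" .
      show ?thesis unfolding q2_def by (subst e[symmetric]) (simp add: algebra_simps)
    qed
    moreover have "min m2 m3 \<le> min (sigma_c / (2 * kappa_c * (1 + kappa_gc\<^sup>2))) (sigma_c * kappa_v * alpha k / (2 * kappa_c))"
    proof -
      have "sigma_c * kappa_v * amin tmin / (2 * kappa_c) \<le> sigma_c * kappa_v * alpha k / (2 * kappa_c)"
        using aa sc kv consts_pos by (intro divide_right_mono mult_left_mono) auto
      then show ?thesis unfolding m2_def m3_def by linarith
    qed
    ultimately show ?thesis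
      by (smt (verit) mult_right_mono zero_le_power2 mult.commute)
  qed
  have C: "m * (chib k)\<^sup>2 \<le> m * q1\<^sup>2 + m * q2\<^sup>2"
  proof -
    have "(chib k)\<^sup>2 \<le> q1\<^sup>2 + q2\<^sup>2"
      unfolding chib_eq q1_def[symmetric] q2_def[symmetric] by (simp add: max_def)
    then show ?thesis using m0 by (metis distrib_left mult_left_mono)
  qed
  have "m * q1\<^sup>2 \<le> m1 * q1\<^sup>2" by (intro mult_right_mono) (auto simp: m_def)
  moreover have "m * q2\<^sup>2 \<le> min m2 m3 * q2\<^sup>2" by (intro mult_right_mono) (auto simp: m_def)
  ultimately show ?thesis unfolding km using A B C dq_lb[of k] by linarith
qed

lemma succ_dec: "succ k \<Longrightarrow> Pt (Suc k) \<le> Pt k - kPhi tmin * (chib k)\<^sup>2"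
proof -
  assume sk: "succ k"
  have "eta * ((kPhi tmin / eta) * (chib k)\<^sup>2) \<le> eta * dq k"
    using dq_chib[of k] eta by (intro mult_left_mono) auto
  then have "kPhi tmin * (chib k)\<^sup>2 \<le> eta * dq k" using eta by simp
  then show ?thesis using Pt_step[of k] sk by simp
qed


lemma Pt_lower: "0 \<le> t \<Longrightarrow> t \<le> 1 \<Longrightarrow>
   Pt k \<ge> t * tau k * (sigma_u + 1/2) * (norm (s k))\<^sup>2 / alpha k - tau k * L_g * t\<^sup>2 * (norm (s k))\<^sup>2 / 2"
proof -
  assume t: "0 \<le> t" "t \<le> 1"
  have xX: "x k \<in> X" and yX: "x k + s k \<in> X" using X_iter by auto
  define z where "z = x k + t *\<^sub>R s k"
  have zX: "z \<in> X" using seg_in[OF X_convex xX yX t] by (simp add: z_def)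
  have fz: "f z \<le> f (x k) + t * (g (x k) \<bullet> s k) + L_g / 2 * (t\<^sup>2 * (norm (s k))\<^sup>2)"
    using descent_f[OF f_deriv X_convex xX zX g_lip] t by (simp add: z_def power_mult_distrib)
  have rz: "r z \<le> (1 - t) * r (x k) + t * r (x k + s k)"
  proof -
    have "r ((1 - t) *\<^sub>R x k + t *\<^sub>R (x k + s k)) \<le> (1 - t) * r (x k) + t * r (x k + s k)"
      using convex_onD[OF r_convex] t by blast
    moreover have "(1 - t) *\<^sub>R x k + t *\<^sub>R (x k + s k) = z" by (simp add: z_def algebra_simps)
    ultimately show ?thesis by simp
  qed
  have flb: "f_inf \<le> f z" using f_lb zX by blast
  have rz0: "0 \<le> r z" using r_nonneg by blast
  define E where "E = - (g (x k) \<bullet> s k + r (x k + s k) - r (x k))"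
  define S where "S = (norm (s k))\<^sup>2"
  have FE: "f (x k) - f_inf + r (x k) \<ge> t * E - L_g * t\<^sup>2 * S / 2"
    using fz rz flb rz0 unfolding E_def S_def by (simp add: algebra_simps)
  have tD: "tau k * (- E + (sigma_u + 1/2) * S / alpha k) \<le> norm (c (x k))"
  proof -
    have "tau k * Dv k \<le> (1 - sigma_c) * cdec k" by (rule tauD)
    also have "\<dots> \<le> 1 * cdec k" by (rule mult_right_mono) (use sc cdec_nonneg[of k] in auto)
    also have "\<dots> \<le> norm (c (x k))" by (simp add: cdec_def)
    finally show ?thesis unfolding Dv_def E_def S_def by (simp add: algebra_simps)
  qed
  have tk: "0 \<le> tau k" by (rule tau_nonneg)
  have "tau k * (t * E - L_g * t\<^sup>2 * S / 2) \<le> tau k * (f (x k) - f_inf + r (x k))"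
    using FE tk by (rule mult_left_mono)
  moreover have "t * (tau k * (- E + (sigma_u + 1/2) * S / alpha k)) \<le> t * norm (c (x k))"
    using tD t(1) by (rule mult_left_mono)
  moreover have "t * norm (c (x k)) \<le> 1 * norm (c (x k))" using t by (intro mult_right_mono) auto
  ultimately have "Pt k \<ge> t * tau k * ((sigma_u + 1/2) * S / alpha k) - tau k * L_g * t\<^sup>2 * S / 2"
    unfolding Pt_def by (simp add: algebra_simps)
  then show ?thesis by (simp add: S_def)
qed

lemma Pt_chib: "kPhi tmin * (chib k)\<^sup>2 \<le> Pt k"
proof -
  have ak: "alpha k > 0" by (rule alpha_pos)
  have am: "amin tmin > 0" by (rule amin_pos)
  have aa: "amin tmin \<le> alpha k" by (rule alpha_amin)
  have amL: "amin tmin * L_g \<le> 1"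
  proof -
    have den: "tmin * L_g + L_J > 0" using tm0 consts_pos by (simp add: add_pos_pos)
    have "xi * tmin * L_g \<le> tmin * L_g + L_J"
    proof -
      have "xi * (tmin * L_g) \<le> 1 * (tmin * L_g)" using xi tm0 consts_pos by (intro mult_right_mono) auto
      then show ?thesis using consts_pos by simp
    qed
    then have "xi * tmin / (tmin * L_g + L_J) * L_g \<le> 1" using den by (simp add: field_simps)
    moreover have "amin tmin * L_g \<le> xi * tmin / (tmin * L_g + L_J) * L_g"
      using consts_pos by (intro mult_right_mono) (auto simp: amin_def)
    ultimately show ?thesis by linarith
  qed
  have U: "(norm (u k))\<^sup>2 \<le> (norm (s k))\<^sup>2" using u_le_s[of k] norm_ge_zero power_mono by blast
  have K: "eta * sigma_u * tau k * amin tmin * (norm (u k))\<^sup>2 / (alpha k)\<^sup>2 \<le> Pt k"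
    by (rule key_real[OF tau_nonneg ak zero_le_power2 U _ su eta am aa amL Pt_lower])
       (use consts_pos in auto)
  define q1 where "q1 = norm (u k) / alpha k"
  define q2 where "q2 = norm (wv k)"
  have kP0: "0 \<le> kPhi tmin" using eta su tm0 am sc kv consts_pos
    by (simp add: kPhi_def add_pos_nonneg)
  have Q1: "kPhi tmin * q1\<^sup>2 \<le> Pt k"
  proof -
    have "kPhi tmin \<le> eta * (sigma_u * tmin * amin tmin)" using eta by (simp add: kPhi_def)
    also have "\<dots> \<le> eta * (sigma_u * tau k * amin tmin)"
      using eta su tmk am by (intro mult_left_mono mult_right_mono) auto
    finally have "kPhi tmin * q1\<^sup>2 \<le> eta * (sigma_u * tau k * amin tmin) * q1\<^sup>2"
      by (rule mult_right_mono) simp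
    also have "\<dots> = eta * sigma_u * tau k * amin tmin * (norm (u k))\<^sup>2 / (alpha k)\<^sup>2"
      by (simp add: q1_def power_divide)
    finally show ?thesis using K by linarith
  qed
  have Q2: "kPhi tmin * q2\<^sup>2 \<le> Pt k"
  proof -
    have "kPhi tmin \<le> eta * (sigma_c / (2 * kappa_c * (1 + kappa_gc\<^sup>2)))"
      unfolding kPhi_def by (rule mult_left_mono) (use eta in \<open>auto simp: min_le_iff_disj\<close>)
    then have "kPhi tmin * q2\<^sup>2 \<le> eta * (sigma_c / (2 * kappa_c * (1 + kappa_gc\<^sup>2))) * q2\<^sup>2"
      by (rule mult_right_mono) simp
    also have "\<dots> \<le> norm (c (x k))"
      by (rule c_real) (use eta sc consts_pos c_bd X_iter wv_bound[of k] in \<open>auto simp: q2_def\<close>)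
    also have "\<dots> \<le> Pt k"
    proof -
      have "0 \<le> f (x k) - f_inf + r (x k)" using f_lb X_iter r_nonneg by (smt (verit))
      then show ?thesis unfolding Pt_def using tau_nonneg[of k] by simp
    qed
    finally show ?thesis .
  qed
  have "(chib k)\<^sup>2 = max (q1\<^sup>2) (q2\<^sup>2)"
    unfolding chib_eq q1_def[symmetric] q2_def[symmetric]
    using ak by (auto simp: max_def q1_def q2_def power_mono_iff)
  then show ?thesis using Q1 Q2 by (simp add: max_def)
qed


lemma kPhi_pos: "kPhi tmin > 0"
  using eta su tm0 amin_pos sc kv consts_pos by (simp add: kPhi_def add_pos_nonneg)

lemma hB: "alpha 0 * xi ^ nat (max 0 \<lceil>ln (tmin / (alpha 0 * (tmin * L_g + L_J))) / ln xi\<rceil>)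
     \<le> tmin / (tmin * L_g + L_J)"
proof -
  define q where "q = tmin / (alpha 0 * (tmin * L_g + L_J))"
  define B where "B = nat (max 0 \<lceil>ln q / ln xi\<rceil>)"
  have den: "tmin * L_g + L_J > 0" using tm0 consts_pos by (simp add: add_pos_pos)
  have q0: "q > 0" using tm0 den alpha0 by (simp add: q_def)
  have Aeq: "tmin / (tmin * L_g + L_J) = alpha 0 * q" using alpha0 by (simp add: q_def)
  have xB: "xi ^ B \<le> q"
  proof (cases "q \<ge> 1")
    case True
    have "xi ^ B \<le> 1" using xi by (simp add: power_le_one)
    then show ?thesis using True by simp
  next
    case False
    have lx: "ln xi < 0" using xi by simp
    have lq: "ln q < 0" using False q0 by simp
    have "real B \<ge> ln q / ln xi"
    proof -
      have "of_int \<lceil>ln q / ln xi\<rceil> \<ge> ln q / ln xi" by (rule le_of_int_ceiling)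
      moreover have "ln q / ln xi > 0" using lx lq by (simp add: divide_neg_neg)
      ultimately show ?thesis by (simp add: B_def)
    qed
    then have "real B * ln xi \<le> (ln q / ln xi) * ln xi" using lx by (intro mult_right_mono_neg) auto
    also have "\<dots> = ln q" using lx by simp
    finally have "real B * ln xi \<le> ln q" .
    then have "exp (real B * ln xi) \<le> exp (ln q)" by simp
    moreover have "exp (real B * ln xi) = xi ^ B" using xi by (simp add: ln_realpow[symmetric])
    ultimately show ?thesis using q0 by simp
  qed
  have "alpha 0 * xi ^ B \<le> alpha 0 * q" using xB alpha0 by simp
  then show ?thesis unfolding Aeq by (simp add: B_def q_def)
qed

lemma complexity:
  assumes ep: "\<epsilon> > 0"
  shows "\<exists>k. int k \<le> (max 0 \<lceil>ln (tmin / (alpha 0 * (tmin * L_g + L_J))) / ln xi\<rceil> + 1)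
                 * \<lfloor>Pt 0 / (kPhi tmin * \<epsilon>\<^sup>2)\<rfloor> \<and> chib k \<le> \<epsilon>"
proof -
  define Nu where "Nu = max 0 \<lceil>ln (tmin / (alpha 0 * (tmin * L_g + L_J))) / ln xi\<rceil>"
  define M where "M = \<lfloor>Pt 0 / (kPhi tmin * \<epsilon>\<^sup>2)\<rfloor>"
  define d where "d = kPhi tmin * \<epsilon>\<^sup>2"
  have d0: "d > 0" using kPhi_pos ep by (simp add: d_def)
  have M0: "M \<ge> 0" using Pt_nonneg[of 0] d0 by (simp add: M_def d_def[symmetric])
  have Nu0: "Nu \<ge> 0" by (simp add: Nu_def)
  have chib0: "\<And>k. chib k \<ge> 0" unfolding chib_def by (simp add: le_max_iff_disj)
  show ?thesis
  proof (cases "M = 0")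
    case True
    then have "Pt 0 / d < 1" by (simp add: M_def d_def floor_eq_iff)
    then have "Pt 0 < d" using d0 by (simp add: divide_less_eq)
    then have "kPhi tmin * (chib 0)\<^sup>2 < kPhi tmin * \<epsilon>\<^sup>2" using Pt_chib[of 0] by (simp add: d_def)
    then have "(chib 0)\<^sup>2 < \<epsilon>\<^sup>2" using kPhi_pos by simp
    then have "chib 0 \<le> \<epsilon>" using ep chib0[of 0] by (simp add: power_less_imp_less_base less_imp_le)
    then show ?thesis using True by (intro exI[of _ 0]) (simp add: M_def Nu_def)
  next
    case False
    then have M1: "M \<ge> 1" using M0 by simp
    have "\<exists>k \<le> nat M + nat Nu. chib k \<le> \<epsilon>"
    proof (rule ccontr)
      assume "\<not> (\<exists>k \<le> nat M + nat Nu. chib k \<le> \<epsilon>)"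
      then have big: "\<And>k. k \<le> nat M + nat Nu \<Longrightarrow> chib k > \<epsilon>" by force
      define K where "K = Suc (nat M + nat Nu)"
      have "\<exists>S U. S + U = K \<and> U \<le> nat Nu \<and> alpha K = alpha 0 * xi ^ U \<and> Pt K + d * real S \<le> Pt 0"
      proof (rule count_inv[where A = "tmin / (tmin * L_g + L_J)"])
        show "\<forall>k<K. succ k \<longrightarrow> alpha (Suc k) = alpha k \<and> Pt (Suc k) \<le> Pt k - d"
        proof (intro allI impI conjI)
          fix k assume k: "k < K" and sk: "succ k"
          show "alpha (Suc k) = alpha k" using step_succ[OF sk] by simp
          have "chib k > \<epsilon>" using big k by (simp add: K_def)
          then have "\<epsilon>\<^sup>2 \<le> (chib k)\<^sup>2" using ep by (intro power_mono) auto
          then have "d \<le> kPhi tmin * (chib k)\<^sup>2" unfolding d_def using kPhi_pos by simp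
          then show "Pt (Suc k) \<le> Pt k - d" using succ_dec[OF sk] by simp
        qed
        show "\<forall>k<K. \<not> succ k \<longrightarrow> alpha (Suc k) = xi * alpha k \<and> Pt (Suc k) \<le> Pt k \<and> alpha k > tmin / (tmin * L_g + L_J)"
        proof (intro allI impI conjI)
          fix k assume "k < K" and ns: "\<not> succ k"
          show "alpha (Suc k) = xi * alpha k" using step_fail[OF ns] by simp
          show "Pt (Suc k) \<le> Pt k" using Pt_step[of k] ns by simp
          show "alpha k > tmin / (tmin * L_g + L_J)" using fail_alpha[OF ns] .
        qed
        show "alpha 0 * xi ^ nat Nu \<le> tmin / (tmin * L_g + L_J)" using hB by (simp add: Nu_def)
      qed (use xi alpha0 in auto)
      then obtain S U where SU: "S + U = K" "U \<le> nat Nu" "Pt K + d * real S \<le> Pt 0" by blast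
      have "d * real S \<le> Pt 0" using SU(3) Pt_nonneg[of K] by simp
      then have "real S \<le> Pt 0 / d" using d0 by (simp add: le_divide_eq mult.commute)
      then have "int S \<le> M" unfolding M_def d_def[symmetric] by (simp add: le_floor_iff)
      moreover have "S \<ge> nat M + 1" using SU(1,2) by (simp add: K_def)
      ultimately show False using M0 by linarith
    qed
    then obtain k where k: "k \<le> nat M + nat Nu" "chib k \<le> \<epsilon>" by blast
    have "int k \<le> M + Nu" using k M0 Nu0 by linarith
    also have "\<dots> \<le> (Nu + 1) * M"
    proof -
      have "Nu * 1 \<le> Nu * M" using M1 Nu0 by (intro mult_left_mono) auto
      then show ?thesis by (simp add: algebra_simps)
    qed
    finally show ?thesis using k by (intro exI[of _ k]) (simp add: M_def Nu_def)
  qed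
qed

end

lemma freq: "\<forall>\<delta>>0. \<forall>N. \<exists>k\<ge>N. norm (wv k) < \<delta>"
proof (rule ccontr)
  assume "\<not> (\<forall>\<delta>>0. \<forall>N. \<exists>k\<ge>N. norm (wv k) < \<delta>)"
  then obtain \<delta> N where dp: "\<delta> > 0" and lb: "\<And>k. k \<ge> N \<Longrightarrow> norm (wv k) \<ge> \<delta>"
    by (meson not_less)
  define B1 where "B1 = 1 / (1 + kappa_gc\<^sup>2)"
  define Lh where "Lh = tau_m1 * L_g + L_J"
  define K2 where "K2 = (kappa_gf + kappa_dr)\<^sup>2 + (kappa_v * (kappa_gc * kappa_c))\<^sup>2"
  define ast where "ast = min (B1 / kappa_v) ((1 - eta) * sigma_c * \<delta>\<^sup>2 * kappa_v / (kappa_c * Lh * K2))"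
  have B1p: "B1 > 0" by (simp add: B1_def add_pos_nonneg)
  have Lhp: "Lh > 0" using taum1 consts_pos by (simp add: Lh_def add_pos_pos)
  have K2p: "K2 > 0" using consts_pos by (simp add: K2_def add_pos_nonneg)
  have astp: "ast > 0" using B1p kv eta sc dp consts_pos Lhp K2p by (simp add: ast_def)
  have sbound: "(norm (s k))\<^sup>2 \<le> (alpha k)\<^sup>2 * K2" for k
  proof -
    have ak: "alpha k > 0" by (rule alpha_pos)
    have "norm (u k) \<le> alpha k * (kappa_gf + kappa_dr)" by (rule u_bound)
    then have u2: "(norm (u k))\<^sup>2 \<le> (alpha k)\<^sup>2 * (kappa_gf + kappa_dr)\<^sup>2"
      by (metis norm_ge_zero power_mono power_mult_distrib)
    have cb: "norm (c (x k)) \<le> kappa_c" using c_bd X_iter by blast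
    have "norm (wv k) \<le> kappa_gc * kappa_c"
      using wv_bound[of k] cb consts_pos by (meson mult_left_mono order_trans less_imp_le)
    then have "norm (v k) \<le> kappa_v * alpha k * (kappa_gc * kappa_c)"
      using v_bound[of k] kv ak by (meson mult_left_mono order_trans less_imp_le mult_pos_pos)
    then have v2: "(norm (v k))\<^sup>2 \<le> (alpha k)\<^sup>2 * (kappa_v * (kappa_gc * kappa_c))\<^sup>2"
      by (metis norm_ge_zero power_mono power_mult_distrib mult.commute mult.left_commute)
    show ?thesis using s_norm[of k] u2 v2 by (simp add: K2_def algebra_simps)
  qed
  have acc: "succ k" if kN: "k \<ge> N" and ak: "alpha k \<le> ast" for k
  proof (rule accept)
    have apos: "alpha k > 0" by (rule alpha_pos)
    have a1: "kappa_v * alpha k \<le> B1" using ak kv by (simp add: ast_def field_simps)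
    have a2: "alpha k * (kappa_c * Lh * K2) \<le> (1 - eta) * sigma_c * \<delta>\<^sup>2 * kappa_v"
      using ak consts_pos Lhp K2p by (simp add: ast_def le_divide_eq)
    have "sigma_c * (\<delta>\<^sup>2 * (kappa_v * alpha k) / (2 * kappa_c)) \<le> sigma_c * cdec k"
    proof (rule mult_left_mono)
      have "\<delta>\<^sup>2 \<le> (norm (wv k))\<^sup>2" using lb[OF kN] dp by (intro power_mono) auto
      then have "\<delta>\<^sup>2 * (kappa_v * alpha k) / (2 * kappa_c) \<le> (norm (wv k))\<^sup>2 * (kappa_v * alpha k) / (2 * kappa_c)"
        using kv apos consts_pos by (intro divide_right_mono mult_right_mono) auto
      also have "\<dots> = (norm (wv k))\<^sup>2 * min B1 (kappa_v * alpha k) / (2 * kappa_c)" using a1 by (simp add: min_def)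
      also have "\<dots> \<le> cdec k" using cauchy[of k] by (simp add: B1_def)
      finally show "\<delta>\<^sup>2 * (kappa_v * alpha k) / (2 * kappa_c) \<le> cdec k" .
    qed (use sc in simp)
    moreover have "sigma_c * cdec k \<le> dq k"
    proof -
      have "0 \<le> tau k * sigma_u * (norm (s k))\<^sup>2 / alpha k" using tau_nonneg[of k] su apos by simp
      then show ?thesis using dq_lb[of k] by linarith
    qed
    ultimately have dql: "sigma_c * (\<delta>\<^sup>2 * (kappa_v * alpha k) / (2 * kappa_c)) \<le> dq k" by linarith
    have "(tau k * L_g + L_J - tau k / alpha k) * (norm (s k))\<^sup>2 / 2 \<le> Lh * ((alpha k)\<^sup>2 * K2) / 2"
    proof -
      have "tau k * L_g + L_J - tau k / alpha k \<le> Lh"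
      proof -
        have "0 \<le> tau k / alpha k" using tau_nonneg[of k] apos by simp
        moreover have "tau k * L_g \<le> tau_m1 * L_g" using tau_le_m1[of k] consts_pos by (intro mult_right_mono) auto
        ultimately show ?thesis unfolding Lh_def by linarith
      qed
      moreover have "0 \<le> (norm (s k))\<^sup>2" by simp
      ultimately have "(tau k * L_g + L_J - tau k / alpha k) * (norm (s k))\<^sup>2 \<le> Lh * (norm (s k))\<^sup>2"
        by (rule mult_right_mono)
      also have "\<dots> \<le> Lh * ((alpha k)\<^sup>2 * K2)" using sbound[of k] Lhp by (intro mult_left_mono) auto
      finally show ?thesis by simp
    qed
    also have "\<dots> \<le> (1 - eta) * (sigma_c * (\<delta>\<^sup>2 * (kappa_v * alpha k) / (2 * kappa_c)))"
    proof -
      have "alpha k * (alpha k * (kappa_c * Lh * K2)) \<le> alpha k * ((1 - eta) * sigma_c * \<delta>\<^sup>2 * kappa_v)"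
        using a2 apos by (intro mult_left_mono) auto
      then show ?thesis using consts_pos by (simp add: field_simps power2_eq_square)
    qed
    also have "\<dots> \<le> (1 - eta) * dq k" using dql eta by (intro mult_left_mono) auto
    finally show "(tau k * L_g + L_J - tau k / alpha k) * (norm (s k))\<^sup>2 / 2 \<le> (1 - eta) * dq k" .
  qed
  define alb where "alb = min (alpha N) (xi * ast)"
  have albp: "alb > 0" using alpha_pos[of N] xi astp by (simp add: alb_def)
  have alow: "alpha (N + j) \<ge> alb" for j
  proof (induction j)
    case 0 then show ?case by (simp add: alb_def)
  next
    case (Suc j)
    show ?case
    proof (cases "succ (N + j)")
      case True then show ?thesis using step_succ[OF True] Suc by simp
    next
      case False
      then have "alpha (N + j) > ast" using acc[of "N + j"] by force
      then have "xi * alpha (N + j) \<ge> xi * ast" using xi by (intro mult_left_mono) auto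
      then show ?thesis using step_fail[OF False] by (simp add: alb_def min_le_iff_disj)
    qed
  qed
  define dd where "dd = eta * (sigma_c * (\<delta>\<^sup>2 * min B1 (kappa_v * alb) / (2 * kappa_c)))"
  have ddp: "dd > 0" using eta sc dp B1p kv albp consts_pos by (simp add: dd_def)
  have sdec: "Pt (Suc (N + j)) \<le> Pt (N + j) - dd" if sj: "succ (N + j)" for j
  proof -
    have apos: "alpha (N + j) > 0" by (rule alpha_pos)
    have "\<delta>\<^sup>2 * min B1 (kappa_v * alb) / (2 * kappa_c)
        \<le> (norm (wv (N + j)))\<^sup>2 * min B1 (kappa_v * alpha (N + j)) / (2 * kappa_c)"
    proof (intro divide_right_mono mult_mono)
      show "\<delta>\<^sup>2 \<le> (norm (wv (N + j)))\<^sup>2" using lb[of "N + j"] dp by (intro power_mono) auto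
      show "min B1 (kappa_v * alb) \<le> min B1 (kappa_v * alpha (N + j))"
        using alow[of j] kv by (simp add: min_le_iff_disj)
    qed (use B1p kv albp consts_pos in auto)
    also have "\<dots> \<le> cdec (N + j)" using cauchy[of "N + j"] by (simp add: B1_def)
    finally have "sigma_c * (\<delta>\<^sup>2 * min B1 (kappa_v * alb) / (2 * kappa_c)) \<le> sigma_c * cdec (N + j)"
      using sc by (intro mult_left_mono) auto
    also have "\<dots> \<le> dq (N + j)"
    proof -
      have "0 \<le> tau (N + j) * sigma_u * (norm (s (N + j)))\<^sup>2 / alpha (N + j)" using tau_nonneg[of "N + j"] su apos by simp
      then show ?thesis using dq_lb[of "N + j"] by linarith
    qed
    finally have "dd \<le> eta * dq (N + j)" unfolding dd_def using eta by (intro mult_left_mono) auto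
    then show ?thesis using Pt_step[of "N + j"] sj by simp
  qed
  obtain B where B: "xi ^ B < ast / alpha N" using real_arch_pow_inv[of "ast / alpha N" xi] astp alpha_pos[of N] xi by auto
  have hB': "alpha (N + 0) * xi ^ B \<le> ast" using B alpha_pos[of N] by (simp add: field_simps)
  define K where "K = B + nat \<lceil>Pt N / dd\<rceil> + 1"
  have "\<exists>S U. S + U = K \<and> U \<le> B \<and> alpha (N + K) = alpha (N + 0) * xi ^ U \<and> Pt (N + K) + dd * real S \<le> Pt (N + 0)"
  proof (rule count_inv[where P = "\<lambda>j. Pt (N + j)" and a = "\<lambda>j. alpha (N + j)" and sc = "\<lambda>j. succ (N + j)" and A = ast])
    show "\<forall>k<K. succ (N + k) \<longrightarrow> alpha (N + Suc k) = alpha (N + k) \<and> Pt (N + Suc k) \<le> Pt (N + k) - dd"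
      using step_succ sdec by simp
    show "\<forall>k<K. \<not> succ (N + k) \<longrightarrow> alpha (N + Suc k) = xi * alpha (N + k) \<and> Pt (N + Suc k) \<le> Pt (N + k) \<and> ast < alpha (N + k)"
    proof (intro allI impI conjI)
      fix k assume "k < K" and ns: "\<not> succ (N + k)"
      show "alpha (N + Suc k) = xi * alpha (N + k)" using step_fail[OF ns] by simp
      show "Pt (N + Suc k) \<le> Pt (N + k)" using Pt_step[of "N + k"] ns by simp
      show "ast < alpha (N + k)" using acc[of "N + k"] ns by force
    qed
  qed (use hB' xi alpha_pos in auto)
  then obtain S U where SU: "S + U = K" "U \<le> B" "Pt (N + K) + dd * real S \<le> Pt N" by auto
  have "dd * real S \<le> Pt N" using SU(3) Pt_nonneg[of "N + K"] by simp
  then have "real S \<le> Pt N / dd" using ddp by (simp add: le_divide_eq mult.commute)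
  also have "\<dots> \<le> real (nat \<lceil>Pt N / dd\<rceil>)" by linarith
  finally have "S \<le> nat \<lceil>Pt N / dd\<rceil>" by linarith
  moreover have "S \<ge> nat \<lceil>Pt N / dd\<rceil> + 1" using SU(1,2) by (simp add: K_def)
  ultimately show False by simp
qed

lemma subseq_exists: "\<exists>\<phi>::nat \<Rightarrow> nat. strict_mono \<phi> \<and> (\<lambda>i. norm (wv (\<phi> i))) \<longlonglongrightarrow> 0"
proof -
  have "\<exists>f. \<forall>n. norm (wv (f n)) < 1 / real (Suc n) \<and> f n < f (Suc n)"
  proof (rule dependent_nat_choice)
    obtain k where "k \<ge> 0" "norm (wv k) < 1" using freq[rule_format, of 1 0] by auto
    then show "\<exists>k. norm (wv k) < 1 / real (Suc 0)" by auto
  next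
    fix k n assume "norm (wv k) < 1 / real (Suc n)"
    have "(1 / real (Suc (Suc n))) > 0" by simp
    then obtain k' where "k' \<ge> Suc k" "norm (wv k') < 1 / real (Suc (Suc n))"
      using freq by blast
    then show "\<exists>k'. norm (wv k') < 1 / real (Suc (Suc n)) \<and> k < k'" by auto
  qed
  then obtain \<phi> where phi: "\<And>n. norm (wv (\<phi> n)) < 1 / real (Suc n)" "\<And>n. \<phi> n < \<phi> (Suc n)" by blast
  have "strict_mono \<phi>" using phi(2) by (simp add: strict_mono_Suc_iff)
  moreover have "(\<lambda>i. norm (wv (\<phi> i))) \<longlonglongrightarrow> 0" by (rule LIMSEQ_norm_0) (use phi(1) in simp)
  ultimately show ?thesis by blast
qed

lemma tau_dich: "(\<exists>tmin>0. \<forall>k. tau k \<ge> tmin) \<or> tau \<longlonglongrightarrow> 0"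
proof -
  have bb: "bdd_below (range tau)" unfolding bdd_below_def using tau_nonneg by blast
  define L where "L = (INF i. tau i)"
  have lim: "tau \<longlonglongrightarrow> L" unfolding L_def by (rule LIMSEQ_decseq_INF[OF bb tau_dec])
  have low: "\<forall>k. L \<le> tau k" unfolding L_def using bb by (auto intro: cINF_lower)
  have "0 \<le> L" unfolding L_def by (rule cINF_greatest) (auto simp: tau_nonneg)
  then show ?thesis using lim low by (cases "L > 0") auto
qed

end
theorem theorem3p19:
  fixes f :: "real^'n \<Rightarrow> real" and g :: "real^'n \<Rightarrow> real^'n"
    and c :: "real^'n \<Rightarrow> real^'m" and J :: "real^'n \<Rightarrow> real^'n^'m"
    and r :: "real^'n \<Rightarrow> real"
    and x v u s gr :: "nat \<Rightarrow> real^'n" and y :: "nat \<Rightarrow> real^'m"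
    and alpha tau betac :: "nat \<Rightarrow> real"
    and tau_m1 kappa_v sigma_c eps_tau xi eta sigma_u :: real
    and X :: "(real^'n) set"
    and f_inf kappa_gf kappa_c kappa_gc kappa_dr L_g L_J :: real
  assumes mn: "CARD('m) \<le> CARD('n)"
    and f_deriv: "\<forall>z. GDERIV f z :> g z" and g_cont: "continuous_on UNIV g"
    and c_deriv: "\<forall>z. (c has_derivative (\<lambda>h. J z *v h)) (at z)"
    and J_cont: "continuous_on UNIV J"
    and r_nonneg: "\<forall>z. r z \<ge> 0" and r_convex: "convex_on UNIV r"
    and alpha0: "alpha 0 > 0" and taum1: "tau_m1 > 0"
    and kv: "kappa_v > 0"
    and sc: "0 < sigma_c" "sigma_c < 1"
    and et: "0 < eps_tau" "eps_tau < 1"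
    and xi: "0 < xi" "xi < 1"
    and eta: "0 < eta" "eta < 1"
    and su: "0 < sigma_u" "sigma_u \<le> 1/2"
    and step1a: "\<forall>k. transpose (J (x k)) *v c (x k) \<noteq> 0 \<longrightarrow>
        v k \<in> range (\<lambda>w. transpose (J (x k)) *v w)
      \<and> norm (v k) \<le> kappa_v * alpha k * norm (transpose (J (x k)) *v c (x k))
      \<and> 0 \<le> betac k \<and> betac k \<le> kappa_v * alpha k
      \<and> (\<forall>\<beta>. 0 \<le> \<beta> \<and> \<beta> \<le> kappa_v * alpha k \<longrightarrow>
            (1/2) * (norm (c (x k) - betac k *\<^sub>R (J (x k) *v (transpose (J (x k)) *v c (x k)))))\<^sup>2
          \<le> (1/2) * (norm (c (x k) - \<beta> *\<^sub>R (J (x k) *v (transpose (J (x k)) *v c (x k)))))\<^sup>2)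
      \<and> norm (c (x k) + J (x k) *v v k)
          \<le> norm (c (x k) + J (x k) *v (- (betac k *\<^sub>R (transpose (J (x k)) *v c (x k)))))"
    and step1b: "\<forall>k. transpose (J (x k)) *v c (x k) = 0 \<longrightarrow> v k = 0 \<and> c (x k) = 0"
    and step2: "\<forall>k. J (x k) *v u k = 0 \<and>
       (\<forall>w. J (x k) *v w = 0 \<longrightarrow>
          g (x k) \<bullet> u k + (norm (u k))\<^sup>2 / (2 * alpha k) + r (x k + v k + u k)
          \<le> g (x k) \<bullet> w + (norm w)\<^sup>2 / (2 * alpha k) + r (x k + v k + w))"
    and s_def: "\<forall>k. s k = v k + u k" and s_nz: "\<forall>k. s k \<noteq> 0"
    and opt: "\<forall>k. gr k \<in> subdiff r (x k + s k) \<and>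
       g (x k) + (1 / alpha k) *\<^sub>R u k + gr k - transpose (J (x k)) *v y k = 0"
    and step3: "\<forall>k. let tp = (if k = 0 then tau_m1 else tau (k - 1));
          D = g (x k) \<bullet> s k + (sigma_u + 1/2) * (norm (s k))\<^sup>2 / alpha k + r (x k + s k) - r (x k)
        in (if D \<le> 0 then tau k = tp
            else (let tt = (1 - sigma_c) * (norm (c (x k)) - norm (c (x k) + J (x k) *v v k)) / D
                  in tau k = (if tp \<le> tt then tp else min ((1 - eps_tau) * tp) tt)))"
    and step4: "\<forall>k. let dq = - tau k * (g (x k) \<bullet> s k + (norm (s k))\<^sup>2 / (2 * alpha k)
                              + r (x k + s k) - r (x k))
                   + norm (c (x k)) - norm (c (x k) + J (x k) *v s k);
          Phi = (\<lambda>z. tau k * (f z + r z) + norm (c z))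
        in (if Phi (x k + s k) \<le> Phi (x k) - eta * dq
            then x (Suc k) = x k + s k \<and> alpha (Suc k) = alpha k
            else x (Suc k) = x k \<and> alpha (Suc k) = xi * alpha k)"
    and X_open: "open X" and X_convex: "convex X"
    and X_iter: "\<forall>k. x k \<in> X \<and> x k + s k \<in> X"
    and consts_pos: "kappa_gf > 0" "kappa_c > 0" "kappa_gc > 0" "kappa_dr > 0" "L_g > 0" "L_J > 0"
    and f_lb: "\<forall>z\<in>X. f z \<ge> f_inf"
    and g_bd: "\<forall>z\<in>X. norm (g z) \<le> kappa_gf"
    and c_bd: "\<forall>z\<in>X. norm (c z) \<le> kappa_c"
    and J_bd: "\<forall>z\<in>X. onorm (\<lambda>h. J z *v h) \<le> kappa_gc"
    and dr_bd: "\<forall>z\<in>X. \<forall>w\<in>subdiff r z. norm w \<le> kappa_dr"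
    and g_lip: "\<forall>z\<in>X. \<forall>w\<in>X. norm (g z - g w) \<le> L_g * norm (z - w)"
    and J_lip: "\<forall>z\<in>X. \<forall>w\<in>X. onorm (\<lambda>h. (J z - J w) *v h) \<le> L_J * norm (z - w)"
  shows "((\<exists>tmin>0. \<forall>k. tau k \<ge> tmin) \<or> tau \<longlonglongrightarrow> 0)
    \<and> (\<forall>tmin>0. (\<forall>k. tau k \<ge> tmin) \<longrightarrow>
         (let amin = min (alpha 0) (xi * tmin / (tmin * L_g + L_J));
              kPhi = eta * min (min (sigma_u * tmin * amin)
                                    (sigma_c / (2 * kappa_c * (1 + kappa_gc\<^sup>2))))
                               (sigma_c * kappa_v * amin / (2 * kappa_c))
          in (\<forall>k. alpha k \<ge> amin)
           \<and> (\<forall>\<epsilon>>0. \<exists>k. int k \<le>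
                 (max 0 \<lceil>ln (tmin / (alpha 0 * (tmin * L_g + L_J))) / ln xi\<rceil> + 1)
                 * \<lfloor>(tau 0 * (f (x 0) - f_inf + r (x 0)) + norm (c (x 0))) / (kPhi * \<epsilon>\<^sup>2)\<rfloor>
               \<and> max (norm (g (x k) + gr k - transpose (J (x k)) *v y k))
                      (norm (transpose (J (x k)) *v c (x k))) \<le> \<epsilon>)))
    \<and> (tau \<longlonglongrightarrow> 0 \<longrightarrow>
         (\<exists>\<phi>::nat \<Rightarrow> nat. strict_mono \<phi> \<and>
            (\<lambda>i. norm (transpose (J (x (\<phi> i))) *v c (x (\<phi> i)))) \<longlonglongrightarrow> 0))"
proof -
  interpret A: alg f g c J r x v u s gr y alpha tau betac tau_m1 kappa_v sigma_c eps_tau xi eta sigma_u X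
      f_inf kappa_gf kappa_c kappa_gc kappa_dr L_g L_J
    by unfold_locales (fact assms)+
  show ?thesis
  proof (intro conjI allI impI)
    show "(\<exists>tmin>0. \<forall>k. tau k \<ge> tmin) \<or> tau \<longlonglongrightarrow> 0" by (rule A.tau_dich)
  next
    fix tmin :: real
    assume tm: "tmin > 0" "\<forall>k. tau k \<ge> tmin"
    have a: "\<forall>k. alpha k \<ge> min (alpha 0) (xi * tmin / (tmin * L_g + L_J))"
      using A.alpha_lb[OF tm] by blast
    have b: "\<forall>\<epsilon>>0. \<exists>k. int k \<le> (max 0 \<lceil>ln (tmin / (alpha 0 * (tmin * L_g + L_J))) / ln xi\<rceil> + 1)
                 * \<lfloor>A.Pt 0 / (A.kPhi tmin * \<epsilon>\<^sup>2)\<rfloor> \<and> A.chib k \<le> \<epsilon>"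
      using A.complexity[OF tm] by blast
    show "let amin = min (alpha 0) (xi * tmin / (tmin * L_g + L_J));
              kPhi = eta * min (min (sigma_u * tmin * amin)
                                    (sigma_c / (2 * kappa_c * (1 + kappa_gc\<^sup>2))))
                               (sigma_c * kappa_v * amin / (2 * kappa_c))
          in (\<forall>k. alpha k \<ge> amin)
           \<and> (\<forall>\<epsilon>>0. \<exists>k. int k \<le>
                 (max 0 \<lceil>ln (tmin / (alpha 0 * (tmin * L_g + L_J))) / ln xi\<rceil> + 1)
                 * \<lfloor>(tau 0 * (f (x 0) - f_inf + r (x 0)) + norm (c (x 0))) / (kPhi * \<epsilon>\<^sup>2)\<rfloor>
               \<and> max (norm (g (x k) + gr k - transpose (J (x k)) *v y k))
                      (norm (transpose (J (x k)) *v c (x k))) \<le> \<epsilon>)"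
      unfolding Let_def using a b unfolding A.Pt_def A.kPhi_def A.amin_def A.chib_def A.wv_def
      by blast
  next
    assume "tau \<longlonglongrightarrow> 0"
    show "\<exists>\<phi>::nat \<Rightarrow> nat. strict_mono \<phi> \<and>
            (\<lambda>i. norm (transpose (J (x (\<phi> i))) *v c (x (\<phi> i)))) \<longlonglongrightarrow> 0"
      using A.subseq_exists unfolding A.wv_def .
  qed
qed

end
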